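(* Let $G$ be an instance of the rank-maximal matchings problem with last-resort posts added (so ranks are $1,\dots,r+1$), let $M$ be a rank-maximal matching of $G$, let $G'$ be the reduced graph of $G$, and let $k$ be the number of posts unmatched by $M$. Let $H$ be the instance obtained from $G$ by adding $k$ new applicants $ad_1,\dots,ad_k$, each of whose preference list consists of all posts in $\mathcal{E}_1\cap\dots\cap\mathcal{E}_{r+1}$ (the sets computed by Irving et al.'s algorithm on $G$), all tied at rank $r+2$; the posts of $H$ are those of $G$, and the original applicants keep their lists. Let $I$ be the reduced graph of $H$ obtained by running Irving et al.'s algorithm on $H$. Then: (1) For each rank-maximal matching $N$ of $G$, there are exactly $k!$ distinct rank-maximal matchings of $H$ whose edges at the original applicants of $G$ are exactly the edges of $N$. (2) Every rank-maximal matching of $H$ matches all applicants and all posts of $H$, and all its edges are edges of $I$; hence it is a perfect matching of $I$. (3) If $N$ is a matching of $G$ that is not rank-maximal, then there is no perfect matching of $I$ whose edges at the original applicants of $G$ are exactly the edges of $N$.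
   Context: An instance is a bipartite graph $(\mathcal{A}\cup\mathcal{P},E)$ of applicants and posts with $E=E_1\cup\dots\cup E_R$ disjoint, where $(a,p)\in E_i$ means $p$ is an $i$-th choice of $a$ (ties allowed). The signature of a matching is $(x_1,\dots,x_R)$, $x_i$ the number of applicants matched along rank-$i$ edges; a matching is rank-maximal if its signature is lexicographically maximum. Starting from an instance with ranks $1,\dots,r$, "adding last-resort posts" means giving each applicant $a$ its own new post $\ell(a)$ with $(a,\ell(a))$ of rank $r+1$. Even/odd/unreachable: for a bipartite graph and maximum matching $N$, a vertex is even (odd) if an even (odd) length $N$-alternating path leads to it from an $N$-unmatched vertex, unreachable otherwise; independent of $N$. Irving et al.'s algorithm on an instance with maximum rank $R$: $G'_1=(\mathcal{A}\cup\mathcal{P},E_1)$, $M_1$ a maximum matching. For $i=1,\dots,R-1$: let $\mathcal{E}_i,\mathcal{O}_i,\mathcal{U}_i$ be the even/odd/unreachable vertices of $G'_i$; delete all edges of rank $>i$ incident to $\mathcal{O}_i\cup\mathcal{U}_i$; delete from $G'_i$ the edges joining $\mathcal{O}_i$ to $\mathcal{O}_i\cup\mathcal{U}_i$; add the remaining edges of $E_{i+1}$ to get $G'_{i+1}$; let $M_{i+1}$ be a maximum matching of $G'_{i+1}$ augmenting $M_i$. With $\mathcal{E}_R,\mathcal{O}_R,\mathcal{U}_R$ the even/odd/unreachable vertices of $G'_R$, the reduced graph is $G'_R$ minus the edges joining $\mathcal{O}_R$ to $\mathcal{O}_R\cup\mathcal{U}_R$. These objects do not depend on the choices made. (For $G$,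 $R=r+1$; for $H$, $R=r+2$.) The number $k$ of posts unmatched by a rank-maximal matching does not depend on the rank-maximal matching chosen. *)

theory Defs
  imports Main
begin

(* Vertices (applicants and posts) live in one type 'v.  An edge is a pair (a, p)
   with applicant a and post p.  A rank function rk assigns each edge its rank. *)

type_synonym 'v edges = "('v \<times> 'v) set"

definition Vs :: "'v edges \<Rightarrow> 'v set" where
  "Vs M = fst ` M \<union> snd ` M"

definition matching :: "'v edges \<Rightarrow> bool" where
  "matching M \<longleftrightarrow> (\<forall>e\<in>M. \<forall>e'\<in>M. e \<noteq> e' \<longrightarrow> {fst e, snd e} \<inter> {fst e', snd e'} = {})"

definition maximum_matching :: "'v edges \<Rightarrow> 'v edges \<Rightarrow> bool" where
  "maximum_matching F M \<longleftrightarrow> matching M \<and> M \<subseteq> F \<and>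
     (\<forall>M'. matching M' \<and> M' \<subseteq> F \<longrightarrow> card M' \<le> card M)"

definition perfect_matching :: "'v set \<Rightarrow> 'v edges \<Rightarrow> 'v edges \<Rightarrow> bool" where
  "perfect_matching V F M \<longleftrightarrow> matching M \<and> M \<subseteq> F \<and> V \<subseteq> Vs M"

definition adj :: "'v edges \<Rightarrow> 'v \<Rightarrow> 'v \<Rightarrow> bool" where
  "adj F u v \<longleftrightarrow> (u, v) \<in> F \<or> (v, u) \<in> F"

definition alt_path :: "'v set \<Rightarrow> 'v edges \<Rightarrow> 'v edges \<Rightarrow> 'v list \<Rightarrow> bool" where
  "alt_path V F N vs \<longleftrightarrow> vs \<noteq> [] \<and> distinct vs \<and> hd vs \<in> V \<and> hd vs \<notin> Vs N \<and>
     (\<forall>i. Suc i < length vs \<longrightarrow>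
        adj F (vs ! i) (vs ! Suc i) \<and> (adj N (vs ! i) (vs ! Suc i) \<longleftrightarrow> odd i))"

definition some_max_matching :: "'v edges \<Rightarrow> 'v edges" where
  "some_max_matching F = (SOME N. maximum_matching F N)"

definition even_set :: "'v set \<Rightarrow> 'v edges \<Rightarrow> 'v set" where
  "even_set V F = {v \<in> V. \<exists>vs. alt_path V F (some_max_matching F) vs \<and> last vs = v
                              \<and> even (length vs - 1)}"

definition odd_set :: "'v set \<Rightarrow> 'v edges \<Rightarrow> 'v set" where
  "odd_set V F = {v \<in> V. \<exists>vs. alt_path V F (some_max_matching F) vs \<and> last vs = v
                              \<and> odd (length vs - 1)}"

definition unr_set :: "'v set \<Rightarrow> 'v edges \<Rightarrow> 'v set" where
  "unr_set V F = V - even_set V F - odd_set V F"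

definition prune :: "'v set \<Rightarrow> 'v edges \<Rightarrow> 'v edges" where
  "prune V F = (let Od = odd_set V F; U = unr_set V F in
     F - {e \<in> F. (fst e \<in> Od \<and> snd e \<in> Od \<union> U) \<or> (snd e \<in> Od \<and> fst e \<in> Od \<union> U)})"

(* Irving et al.'s algorithm: irv V E rk i = (G'_i, union of O_j \<union> U_j for j < i),
   with G'_0 the empty graph (so G'_1 = rank-1 edges). *)
primrec irv :: "'v set \<Rightarrow> 'v edges \<Rightarrow> ('v \<times> 'v \<Rightarrow> nat) \<Rightarrow> nat \<Rightarrow> 'v edges \<times> 'v set" where
  "irv V E rk 0 = ({}, {})"
| "irv V E rk (Suc i) =
     (let G = fst (irv V E rk i);
          F = snd (irv V E rk i) \<union> odd_set V G \<union> unr_set V G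
      in (prune V G \<union> {e \<in> E. rk e = Suc i \<and> fst e \<notin> F \<and> snd e \<notin> F}, F))"

definition irving_graph :: "'v set \<Rightarrow> 'v edges \<Rightarrow> ('v \<times> 'v \<Rightarrow> nat) \<Rightarrow> nat \<Rightarrow> 'v edges" where
  "irving_graph V E rk i = fst (irv V E rk i)"

definition irving_even :: "'v set \<Rightarrow> 'v edges \<Rightarrow> ('v \<times> 'v \<Rightarrow> nat) \<Rightarrow> nat \<Rightarrow> 'v set" where
  "irving_even V E rk i = even_set V (irving_graph V E rk i)"

definition reduced_graph :: "'v set \<Rightarrow> 'v edges \<Rightarrow> ('v \<times> 'v \<Rightarrow> nat) \<Rightarrow> nat \<Rightarrow> 'v edges" where
  "reduced_graph V E rk R = prune V (irving_graph V E rk R)"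

definition signature :: "('v \<times> 'v \<Rightarrow> nat) \<Rightarrow> 'v edges \<Rightarrow> nat \<Rightarrow> nat" where
  "signature rk M i = card {e \<in> M. rk e = i}"

definition lex_greater :: "(nat \<Rightarrow> nat) \<Rightarrow> (nat \<Rightarrow> nat) \<Rightarrow> bool" where
  "lex_greater x y \<longleftrightarrow> (\<exists>i. y i < x i \<and> (\<forall>j<i. x j = y j))"

definition rank_maximal :: "'v edges \<Rightarrow> ('v \<times> 'v \<Rightarrow> nat) \<Rightarrow> 'v edges \<Rightarrow> bool" where
  "rank_maximal E rk M \<longleftrightarrow> matching M \<and> M \<subseteq> E \<and>
     (\<forall>M'. matching M' \<and> M' \<subseteq> E \<longrightarrow> \<not> lex_greater (signature rk M') (signature rk M))"

end

theory Submission
  imports Defs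
begin

lemma Vs_iff: "v \<in> Vs M \<longleftrightarrow> (\<exists>e\<in>M. v = fst e \<or> v = snd e)"
  unfolding Vs_def by force

lemma Vs_I: "e \<in> M \<Longrightarrow> v \<in> {fst e, snd e} \<Longrightarrow> v \<in> Vs M"
  unfolding Vs_def by auto

lemma Vs_E: "v \<in> Vs M \<Longrightarrow> (\<And>e. e \<in> M \<Longrightarrow> v \<in> {fst e, snd e} \<Longrightarrow> P) \<Longrightarrow> P"
  unfolding Vs_def by auto

lemma Vs_mono: "M \<subseteq> N \<Longrightarrow> Vs M \<subseteq> Vs N"
  unfolding Vs_def by auto

lemma matching_subset: "matching M \<Longrightarrow> N \<subseteq> M \<Longrightarrow> matching N"
  unfolding matching_def by blast

lemma matching_unique: "matching M \<Longrightarrow> e \<in> M \<Longrightarrow> e' \<in> M \<Longrightarrow> v \<in> {fst e, snd e}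
   \<Longrightarrow> v \<in> {fst e', snd e'} \<Longrightarrow> e = e'"
  unfolding matching_def by blast

lemma Vs_converse[simp]: "Vs (converse M) = Vs M"
  unfolding Vs_def by force

lemma adj_converse[simp]: "adj (converse F) = adj F"
  unfolding adj_def by (auto intro!: ext)

lemma alt_path_converse[simp]: "alt_path V (converse F) (converse Y) vs = alt_path V F Y vs"
  unfolding alt_path_def by simp

lemma matching_conv1: "matching M \<Longrightarrow> matching (converse M)"
  unfolding matching_def
proof (intro ballI impI)
  fix e e' assume m: "\<forall>e\<in>M. \<forall>e'\<in>M. e \<noteq> e' \<longrightarrow> {fst e, snd e} \<inter> {fst e', snd e'} = {}"
    and e: "e \<in> M\<inverse>" "e' \<in> M\<inverse>" "e \<noteq> e'"
  obtain a b a' b' where ab: "e = (a,b)" "e' = (a',b')" by (cases e, cases e')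
  then have "(b,a) \<in> M" "(b',a') \<in> M" "(b,a) \<noteq> (b',a')" using e by auto
  then have "{b,a} \<inter> {b',a'} = {}" using m by (metis fst_conv snd_conv)
  then show "{fst e, snd e} \<inter> {fst e', snd e'} = {}" using ab by auto
qed

lemma matching_converse[simp]: "matching (converse M) = matching M"
  by (metis converse_converse matching_conv1)

lemma adjY_iff: "Y \<subseteq> L \<times> R \<Longrightarrow> L \<inter> R = {} \<Longrightarrow>
   adj Y u v \<longleftrightarrow> (if u \<in> L then (u,v) else (v,u)) \<in> Y"
  unfolding adj_def by auto

lemma evens_img: "even (n::nat) \<Longrightarrow> {i. Suc i < n \<and> even i} = (\<lambda>j. 2*j) ` {..<n div 2}"
  by (auto simp: image_iff elim!: evenE)

lemma odds_img: "even (n::nat) \<Longrightarrow> {i. Suc i < n \<and> odd i} = (\<lambda>j. 2*j+1) ` {..<n div 2 - 1}"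
proof -
  assume "even n" then obtain m where n: "n = 2*m" by (auto elim: evenE)
  show ?thesis unfolding n
  proof (intro set_eqI iffI)
    fix i assume "i \<in> {i. Suc i < 2*m \<and> odd i}"
    then obtain j where j: "i = 2*j+1" "2*j+2 < 2*m" by (auto elim!: oddE)
    then show "i \<in> (\<lambda>j. 2*j+1) ` {..<2*m div 2 - 1}"
      by (intro image_eqI[of _ _ j]) auto
  next
    fix i assume "i \<in> (\<lambda>j. 2*j+1) ` {..<2*m div 2 - 1}"
    then show "i \<in> {i. Suc i < 2*m \<and> odd i}" by auto
  qed
qed

lemma aug:
  assumes FLR: "F \<subseteq> L \<times> R" and disj: "L \<inter> R = {}" and finF: "finite F"
    and mY: "matching Y" and YF: "Y \<subseteq> F"
    and ap: "alt_path V F Y vs" and ev: "even (length vs)" and lst: "last vs \<notin> Vs Y"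
  shows "\<exists>W. matching W \<and> W \<subseteq> F \<and> card Y < card W \<and> Vs Y \<subseteq> Vs W"
proof -
  define n where "n = length vs"
  define pe where "pe i = (if vs!i \<in> L then (vs!i, vs!Suc i) else (vs!Suc i, vs!i))" for i
  have ne: "vs \<noteq> []" and dist: "distinct vs" and hdY: "hd vs \<notin> Vs Y"
    and step: "\<And>i. Suc i < n \<Longrightarrow> adj F (vs!i) (vs!Suc i) \<and> (adj Y (vs!i) (vs!Suc i) \<longleftrightarrow> odd i)"
    using ap unfolding alt_path_def n_def by auto
  have evn: "even n" using ev n_def by simp
  have n2: "n \<ge> 2" proof - have "n \<noteq> 0" using ne n_def by simp then show ?thesis using evn by presburger qed
  have YLR: "Y \<subseteq> L \<times> R" using YF FLR by auto
  have peF: "pe i \<in> F" if "Suc i < n" for i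
  proof -
    have "adj F (vs!i) (vs!Suc i)" using step[OF that] by simp
    then show ?thesis using adjY_iff[OF FLR disj, of "vs!i" "vs!Suc i"] unfolding pe_def by simp
  qed
  have peY: "pe i \<in> Y \<longleftrightarrow> odd i" if "Suc i < n" for i
  proof -
    have "adj Y (vs!i) (vs!Suc i) \<longleftrightarrow> odd i" using step[OF that] by simp
    then show ?thesis using adjY_iff[OF YLR disj, of "vs!i" "vs!Suc i"] unfolding pe_def by simp
  qed
  have pev: "{fst (pe i), snd (pe i)} = {vs!i, vs!Suc i}" for i
    by (simp add: pe_def insert_commute)
  have idx: "vs!i = vs!j \<Longrightarrow> i < n \<Longrightarrow> j < n \<Longrightarrow> i = j" for i j
    using nth_eq_iff_index_eq[OF dist, of i j] n_def by simp
  define Pm where "Pm = pe ` {i. Suc i < n \<and> odd i}"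
  define Pn where "Pn = pe ` {i. Suc i < n \<and> even i}"
  define W where "W = (Y - Pm) \<union> Pn"
  have PmY: "Pm \<subseteq> Y" using peY unfolding Pm_def by auto
  have PnY: "Pn \<inter> Y = {}" using peY unfolding Pn_def by auto
  have PnF: "Pn \<subseteq> F" using peF unfolding Pn_def by auto
  have finY: "finite Y" using finF YF finite_subset by blast
  have inj: "inj_on pe {i. Suc i < n}"
  proof (rule inj_onI)
    fix i j assume i: "i \<in> {i. Suc i < n}" and j: "j \<in> {i. Suc i < n}" and e: "pe i = pe j"
    have s: "{vs!i, vs!Suc i} = {vs!j, vs!Suc j}" using pev[of i] pev[of j] e by simp
    show "i = j"
    proof (cases "vs!i = vs!j")
      case True then show ?thesis using idx i j by auto
    next
      case False
      then have "vs!i = vs!Suc j" using s by auto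
      then have "i = Suc j" using idx i j by auto
      moreover have "vs!Suc i \<in> {vs!j, vs!Suc j}" using s by auto
      ultimately have "Suc i = j \<or> Suc i = Suc j" using idx[of "Suc i" j] idx[of "Suc i" "Suc j"] i j by auto
      then show ?thesis using \<open>i = Suc j\<close> by auto
    qed
  qed
  have cPn: "card Pn = n div 2"
  proof -
    have "card Pn = card {i. Suc i < n \<and> even i}"
      unfolding Pn_def by (rule card_image) (rule inj_on_subset[OF inj], auto)
    also have "\<dots> = n div 2" unfolding evens_img[OF evn]
      by (subst card_image) (auto simp: inj_on_def)
    finally show ?thesis .
  qed
  have cPm: "card Pm \<le> n div 2 - 1"
  proof -
    have "card Pm \<le> card {i. Suc i < n \<and> odd i}"
      unfolding Pm_def by (rule card_image_le) (simp add: odds_img[OF evn])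
    also have "\<dots> = n div 2 - 1" unfolding odds_img[OF evn]
      by (subst card_image) (auto simp: inj_on_def)
    finally show ?thesis .
  qed
  have cW: "card W = card Y - card Pm + card Pn"
  proof -
    have "card W = card (Y - Pm) + card Pn"
      unfolding W_def using PnY finY PnF finF finite_subset
      by (subst card_Un_disjoint) (auto intro: finite_subset)
    also have "card (Y - Pm) = card Y - card Pm"
      using PmY finY by (simp add: card_Diff_subset finite_subset)
    finally show ?thesis .
  qed
  have cPmY: "card Pm \<le> card Y" using PmY finY card_mono by blast
  have Ycov: "y \<in> Pm" if y: "y \<in> Y" and j: "j < n" and v: "vs!j \<in> {fst y, snd y}" for y j
  proof -
    have "j \<noteq> 0"
    proof
      assume "j = 0"
      then have "hd vs \<in> {fst y, snd y}" using v hd_conv_nth[OF ne] by simp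
      then show False using hdY Vs_I[OF y] by blast
    qed
    moreover have "j \<noteq> n - 1"
    proof
      assume "j = n - 1"
      then have "last vs \<in> {fst y, snd y}" using v last_conv_nth[OF ne] n_def by simp
      then show False using lst Vs_I[OF y] by blast
    qed
    ultimately have j1: "0 < j" "Suc j < n" using j by auto
    define q where "q = (if odd j then j else j - 1)"
    have o: "odd q" "Suc q < n" "vs!j \<in> {vs!q, vs!Suc q}" using j1 unfolding q_def by auto
    have "pe q \<in> Y" using peY o by auto
    then have "y = pe q" using matching_unique[OF mY y] v o(3) pev[of q] by blast
    then show ?thesis unfolding Pm_def using o by auto
  qed
  have mW: "matching W"
    unfolding matching_def
  proof (intro ballI impI)
    fix e e' assume e: "e \<in> W" and e': "e' \<in> W" and ne: "e \<noteq> e'"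
    show "{fst e, snd e} \<inter> {fst e', snd e'} = {}"
    proof (rule ccontr)
      assume "{fst e, snd e} \<inter> {fst e', snd e'} \<noteq> {}"
      then obtain x where x: "x \<in> {fst e, snd e}" "x \<in> {fst e', snd e'}" by blast
      consider "e \<in> Y - Pm" "e' \<in> Y - Pm" | "e \<in> Pn" "e' \<in> Y - Pm" | "e \<in> Y - Pm" "e' \<in> Pn"
        | "e \<in> Pn" "e' \<in> Pn" using e e' unfolding W_def by blast
      then show False
      proof cases
        case 1 then show ?thesis using matching_unique[OF mY _ _ x] ne by auto
      next
        case 2
        then obtain i where i: "Suc i < n" "e = pe i" unfolding Pn_def by auto
        then have "x = vs!i \<or> x = vs!Suc i" using x pev[of i] by auto
        then obtain a where a: "a < n" "x = vs!a" using i(1) Suc_lessD by blast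
        then have "e' \<in> Pm" using Ycov[of e' a] 2 x(2) by blast
        then show ?thesis using 2 by blast
      next
        case 3
        then obtain i where i: "Suc i < n" "e' = pe i" unfolding Pn_def by auto
        then have "x = vs!i \<or> x = vs!Suc i" using x pev[of i] by auto
        then obtain a where a: "a < n" "x = vs!a" using i(1) Suc_lessD by blast
        then have "e \<in> Pm" using Ycov[of e a] 3 x(1) by blast
        then show ?thesis using 3 by blast
      next
        case 4
        then obtain i j where i: "Suc i < n" "e = pe i" "even i" and j: "Suc j < n" "e' = pe j" "even j"
          unfolding Pn_def by auto
        have "i \<noteq> j" using ne i j by auto
        have "x = vs!i \<or> x = vs!Suc i" using x pev[of i] i by auto
        then obtain a where a: "a = i \<or> a = Suc i" "x = vs!a" by blast
        have "x = vs!j \<or> x = vs!Suc j" using x pev[of j] j by auto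
        then obtain b where b: "b = j \<or> b = Suc j" "x = vs!b" by blast
        have "a < n" "b < n" using a(1) b(1) i(1) j(1) by auto
        then have "a = b" using idx a(2) b(2) by auto
        then show ?thesis using a(1) b(1) \<open>i \<noteq> j\<close> i(3) j(3) by auto
      qed
    qed
  qed
  have VsW: "Vs Y \<subseteq> Vs W"
  proof
    fix v assume "v \<in> Vs Y"
    then obtain y where y: "y \<in> Y" "v \<in> {fst y, snd y}" by (rule Vs_E)
    show "v \<in> Vs W"
    proof (cases "y \<in> Pm")
      case False then have "y \<in> W" using y unfolding W_def by blast
      then show ?thesis using Vs_I y(2) by metis
    next
      case True
      then obtain i where i: "Suc i < n" "odd i" "y = pe i" unfolding Pm_def by auto
      have "v = vs!i \<or> v = vs!Suc i" using y(2) pev[of i] i by auto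
      moreover have "pe (i - 1) \<in> W" using i unfolding W_def Pn_def
        by (intro UnI2 image_eqI[of _ _ "i - 1"]) auto
      moreover have "Suc (Suc i) < n" using i evn
        by (metis Suc_lessI even_Suc)
      then have "pe (Suc i) \<in> W" using i unfolding W_def Pn_def
        by (intro UnI2 image_eqI[of _ _ "Suc i"]) auto
      moreover have "vs!i \<in> {fst (pe (i-1)), snd (pe (i-1))}" using pev[of "i-1"] i
        by (cases i) auto
      moreover have "vs!Suc i \<in> {fst (pe (Suc i)), snd (pe (Suc i))}" using pev[of "Suc i"] by auto
      ultimately show ?thesis using Vs_I by metis
    qed
  qed
  have "W \<subseteq> F" unfolding W_def using YF PnF by auto
  moreover have "card Y < card W" using cW cPn cPm cPmY n2 by auto
  ultimately show ?thesis using mW VsW by blast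
qed



lemma alt_path_parity:
  assumes FLR: "F \<subseteq> L \<times> R" and disj: "L \<inter> R = {}" and ap: "alt_path V F Y vs" and hd: "hd vs \<in> L"
  shows "j < length vs \<Longrightarrow> (vs!j \<in> L \<longleftrightarrow> even j) \<and> (vs!j \<in> R \<longleftrightarrow> odd j)"
proof (induction j)
  case 0
  have "vs \<noteq> []" using ap unfolding alt_path_def by simp
  then have "vs!0 \<in> L" using hd hd_conv_nth by metis
  then show ?case using disj by auto
next
  case (Suc j)
  then have "adj F (vs!j) (vs!Suc j)" using ap unfolding alt_path_def by auto
  then have "(vs!j \<in> L \<and> vs!Suc j \<in> R) \<or> (vs!j \<in> R \<and> vs!Suc j \<in> L)"
    using FLR unfolding adj_def by auto
  moreover have "(vs!j \<in> L \<longleftrightarrow> even j) \<and> (vs!j \<in> R \<longleftrightarrow> odd j)" using Suc by simp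
  ultimately show ?case using disj by auto
qed

lemma alt_path_take:
  assumes ap: "alt_path V F Y vs" and m: "0 < m"
  shows "alt_path V F Y (take m vs)"
proof -
  have ne: "vs \<noteq> []" using ap unfolding alt_path_def by simp
  have "hd (take m vs) = hd vs" using m ne by (cases vs; cases m) auto
  moreover have "take m vs \<noteq> []" using m ne by simp
  moreover have "distinct (take m vs)" using ap unfolding alt_path_def by simp
  moreover have "\<forall>i. Suc i < length (take m vs) \<longrightarrow>
        adj F (take m vs ! i) (take m vs ! Suc i) \<and> (adj Y (take m vs ! i) (take m vs ! Suc i) \<longleftrightarrow> odd i)"
    using ap unfolding alt_path_def by auto
  ultimately show ?thesis using ap unfolding alt_path_def by simp
qed

lemma last_take: "m \<le> length vs \<Longrightarrow> 0 < m \<Longrightarrow> last (take m vs) = vs ! (m - 1)"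
  by (subst last_conv_nth) (auto simp: min_def)

lemma alt_path_snoc:
  assumes ap: "alt_path V F Y vs" and u: "u \<notin> set vs" and a: "adj F (last vs) u"
    and b: "adj Y (last vs) u \<longleftrightarrow> odd (length vs - 1)"
  shows "alt_path V F Y (vs @ [u])"
proof -
  have ne: "vs \<noteq> []" using ap unfolding alt_path_def by simp
  have "\<forall>i. Suc i < length (vs @ [u]) \<longrightarrow>
        adj F ((vs @ [u]) ! i) ((vs @ [u]) ! Suc i) \<and> (adj Y ((vs @ [u]) ! i) ((vs @ [u]) ! Suc i) \<longleftrightarrow> odd i)"
  proof (intro allI impI)
    fix i assume i: "Suc i < length (vs @ [u])"
    show "adj F ((vs @ [u]) ! i) ((vs @ [u]) ! Suc i) \<and> (adj Y ((vs @ [u]) ! i) ((vs @ [u]) ! Suc i) \<longleftrightarrow> odd i)"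
    proof (cases "Suc i < length vs")
      case True
      then show ?thesis using ap unfolding alt_path_def by (auto simp: nth_append)
    next
      case False
      then have i1: "i = length vs - 1" using i by auto
      then have "(vs @ [u]) ! i = last vs" using ne by (simp add: nth_append last_conv_nth)
      moreover have "(vs @ [u]) ! Suc i = u" using i1 ne by (simp add: nth_append)
      ultimately show ?thesis using a b i1 by simp
    qed
  qed
  then show ?thesis using ap u ne unfolding alt_path_def by simp
qed

definition EVh :: "'v set \<Rightarrow> 'v set \<Rightarrow> 'v edges \<Rightarrow> 'v edges \<Rightarrow> 'v set" where
  "EVh V H F Y = {v. \<exists>vs. alt_path V F Y vs \<and> hd vs \<in> H \<and> last vs = v \<and> even (length vs - 1)}"

definition ODh :: "'v set \<Rightarrow> 'v set \<Rightarrow> 'v edges \<Rightarrow> 'v edges \<Rightarrow> 'v set" where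
  "ODh V H F Y = {v. \<exists>vs. alt_path V F Y vs \<and> hd vs \<in> H \<and> last vs = v \<and> odd (length vs - 1)}"

definition noaug :: "'v set \<Rightarrow> 'v edges \<Rightarrow> 'v edges \<Rightarrow> bool" where
  "noaug V F Y \<longleftrightarrow> \<not>(\<exists>vs. alt_path V F Y vs \<and> even (length vs) \<and> last vs \<notin> Vs Y)"

lemma EVh_conv[simp]: "EVh V H (converse F) (converse Y) = EVh V H F Y"
  unfolding EVh_def by simp
lemma ODh_conv[simp]: "ODh V H (converse F) (converse Y) = ODh V H F Y"
  unfolding ODh_def by simp
lemma noaug_conv[simp]: "noaug V (converse F) (converse Y) = noaug V F Y"
  unfolding noaug_def by simp

lemma last_nth_len: "vs \<noteq> [] \<Longrightarrow> last vs = vs ! (length vs - 1)"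
  by (simp add: last_conv_nth)

lemma EVh_sub:
  assumes FLR: "F \<subseteq> L \<times> R" and disj: "L \<inter> R = {}"
  shows "EVh V L F Y \<subseteq> L" "ODh V L F Y \<subseteq> R"
proof -
  show "EVh V L F Y \<subseteq> L"
  proof
    fix v assume "v \<in> EVh V L F Y"
    then obtain vs where vs: "alt_path V F Y vs" "hd vs \<in> L" "last vs = v" "even (length vs - 1)"
      unfolding EVh_def by blast
    have ne: "vs \<noteq> []" using vs(1) unfolding alt_path_def by simp
    show "v \<in> L" using alt_path_parity[OF FLR disj vs(1,2), of "length vs - 1"] vs(3,4) ne
      last_nth_len[OF ne] by simp
  qed
  show "ODh V L F Y \<subseteq> R"
  proof
    fix v assume "v \<in> ODh V L F Y"
    then obtain vs where vs: "alt_path V F Y vs" "hd vs \<in> L" "last vs = v" "odd (length vs - 1)"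
      unfolding ODh_def by blast
    have ne: "vs \<noteq> []" using vs(1) unfolding alt_path_def by simp
    show "v \<in> R" using alt_path_parity[OF FLR disj vs(1,2), of "length vs - 1"] vs(3,4) ne
      last_nth_len[OF ne] by simp
  qed
qed

lemma adj_edge: "adj Y u w \<Longrightarrow> \<exists>e\<in>Y. {fst e, snd e} = {u, w}"
  unfolding adj_def by (metis fst_conv insert_commute snd_conv)

lemma alt_path_prefix_in:
  assumes ap: "alt_path V F Y vs" and j: "j < length vs"
  shows "alt_path V F Y (take (Suc j) vs) \<and> hd (take (Suc j) vs) = hd vs \<and>
    last (take (Suc j) vs) = vs ! j \<and> length (take (Suc j) vs) - 1 = j"
proof -
  have ne: "vs \<noteq> []" using ap unfolding alt_path_def by simp
  show ?thesis using alt_path_take[OF ap, of "Suc j"] last_take[of "Suc j" vs] j ne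
    by (cases vs) auto
qed

context
  fixes V L R :: "'v set" and F Y :: "'v edges"
  assumes FLR: "F \<subseteq> L \<times> R" and disj: "L \<inter> R = {}" and VLR: "V = L \<union> R"
    and mY: "matching Y" and YF: "Y \<subseteq> F" and na: "noaug V F Y"
begin

lemma K_a: "v \<in> L \<Longrightarrow> v \<notin> Vs Y \<Longrightarrow> v \<in> EVh V L F Y"
  unfolding EVh_def
  by (rule CollectI, rule exI[of _ "[v]"]) (auto simp: alt_path_def VLR)

lemma K_b:
  assumes e: "(a,p) \<in> F" and a: "a \<in> EVh V L F Y"
  shows "p \<in> ODh V L F Y"
proof -
  obtain vs where vs: "alt_path V F Y vs" "hd vs \<in> L" "last vs = a" "even (length vs - 1)"
    using a unfolding EVh_def by blast
  have ne: "vs \<noteq> []" and dist: "distinct vs" and hdY: "hd vs \<notin> Vs Y"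
    using vs(1) unfolding alt_path_def by auto
  have pR: "p \<in> R" using e FLR by auto
  show ?thesis
  proof (cases "p \<in> set vs")
    case True
    then obtain j where j: "j < length vs" "vs ! j = p" by (meson in_set_conv_nth)
    have "odd j" using alt_path_parity[OF FLR disj vs(1,2) j(1)] pR j(2) by simp
    moreover note pp = alt_path_prefix_in[OF vs(1) j(1)]
    ultimately show ?thesis unfolding ODh_def using vs(2) j(2)
      by (intro CollectI exI[of _ "take (Suc j) vs"] conjI) simp_all
  next
    case False
    have aY: "\<not> adj Y a p"
    proof
      assume "adj Y a p"
      then have apY: "(a,p) \<in> Y" using pR YF FLR disj unfolding adj_def by auto
      show False
      proof (cases "length vs = 1")
        case True
        then have "a = hd vs" using vs(3) ne by (cases vs) auto
        then show False using hdY Vs_I[OF apY] by simp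
      next
        case False
        moreover have "length vs \<noteq> 0" using ne by simp
        ultimately have n3: "length vs \<ge> 3" using vs(4) by presburger
        define i where "i = length vs - 2"
        have i: "Suc i < length vs" "odd i" using n3 vs(4) unfolding i_def by auto
        have "adj Y (vs!i) (vs!Suc i)" using vs(1) i unfolding alt_path_def by auto
        then obtain e' where e': "e' \<in> Y" "{fst e', snd e'} = {vs!i, vs!Suc i}" using adj_edge by metis
        have si: "Suc i = length vs - 1" using n3 unfolding i_def by simp
        have "vs ! Suc i = a" using vs(3) ne si by (simp add: last_conv_nth)
        then have "e' = (a,p)" using matching_unique[OF mY e'(1) apY, of a] e'(2) by simp
        then have "p \<in> {vs!i, vs!Suc i}" using e'(2) by auto
        then show False using \<open>p \<notin> set vs\<close> i by auto
      qed
    qed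
    have "alt_path V F Y (vs @ [p])"
      by (rule alt_path_snoc[OF vs(1) False]) (use e vs aY in \<open>auto simp: adj_def\<close>)
    moreover have "hd (vs @ [p]) \<in> L" using vs(2) ne by simp
    moreover have "odd (length (vs @ [p]) - 1)" using vs(4) ne by (cases vs) auto
    ultimately show ?thesis unfolding ODh_def by force
  qed
qed

lemma K_c: "p \<in> ODh V L F Y \<Longrightarrow> p \<in> Vs Y"
proof (rule ccontr)
  assume "p \<in> ODh V L F Y" "p \<notin> Vs Y"
  then obtain vs where vs: "alt_path V F Y vs" "last vs = p" "odd (length vs - 1)"
    unfolding ODh_def by blast
  have "even (length vs)" using vs(3) by presburger
  then show False using na vs \<open>p \<notin> Vs Y\<close> unfolding noaug_def by blast
qed

lemma K_c2:
  assumes p: "p \<in> ODh V L F Y" and e: "(a,p) \<in> Y"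
  shows "a \<in> EVh V L F Y"
proof -
  obtain vs where vs: "alt_path V F Y vs" "hd vs \<in> L" "last vs = p" "odd (length vs - 1)"
    using p unfolding ODh_def by blast
  have ne: "vs \<noteq> []" using vs(1) unfolding alt_path_def by auto
  have aL: "a \<in> L" using e YF FLR by auto
  show ?thesis
  proof (cases "a \<in> set vs")
    case True
    then obtain j where j: "j < length vs" "vs ! j = a" by (meson in_set_conv_nth)
    have "even j" using alt_path_parity[OF FLR disj vs(1,2) j(1)] aL j(2) by simp
    moreover note pp = alt_path_prefix_in[OF vs(1) j(1)]
    ultimately show ?thesis unfolding EVh_def using vs(2) j(2)
      by (intro CollectI exI[of _ "take (Suc j) vs"] conjI) simp_all
  next
    case False
    have "alt_path V F Y (vs @ [a])"
      by (rule alt_path_snoc[OF vs(1) False]) (use e YF vs in \<open>auto simp: adj_def\<close>)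
    moreover have "hd (vs @ [a]) \<in> L" using vs(2) ne by simp
    moreover have "even (length (vs @ [a]) - 1)" using vs(4) ne by (cases vs) auto
    ultimately show ?thesis unfolding EVh_def by force
  qed
qed

definition KL where "KL = (L - EVh V L F Y) \<union> ODh V L F Y"

lemma KL_cover: "(a,p) \<in> F \<Longrightarrow> a \<in> KL \<or> p \<in> KL"
  unfolding KL_def using K_b FLR by blast

lemma KL_one: "(a,p) \<in> Y \<Longrightarrow> (a \<in> KL \<longleftrightarrow> p \<notin> KL)"
proof -
  assume e: "(a,p) \<in> Y"
  then have aL: "a \<in> L" and pR: "p \<in> R" using YF FLR by auto
  have "a \<notin> ODh V L F Y" using aL disj EVh_sub(2)[OF FLR disj] by blast
  moreover have "p \<notin> L" using pR disj by blast
  ultimately show ?thesis unfolding KL_def using K_b[of a p] K_c2[of p a] e YF aL by blast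
qed

lemma KL_cov: "KL \<subseteq> Vs Y"
  unfolding KL_def using K_a K_c by blast

end



lemma card_converse[simp]: "card (converse M) = card M"
proof -
  have "converse M = (\<lambda>(x,y). (y,x)) ` M" by auto
  moreover have "inj_on (\<lambda>(x,y). (y,x)) M" by (auto simp: inj_on_def)
  ultimately show ?thesis by (simp add: card_image)
qed

lemma max_conv: "maximum_matching F Z \<Longrightarrow> maximum_matching (converse F) (converse Z)"
  unfolding maximum_matching_def
proof (intro conjI allI impI)
  assume a: "matching Z \<and> Z \<subseteq> F \<and> (\<forall>M'. matching M' \<and> M' \<subseteq> F \<longrightarrow> card M' \<le> card Z)"
  then show "matching (Z\<inverse>)" "Z\<inverse> \<subseteq> F\<inverse>" by auto
  fix M' assume "matching M' \<and> M' \<subseteq> F\<inverse>"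
  then have "matching (M'\<inverse>) \<and> M'\<inverse> \<subseteq> F" by auto
  then have "card (M'\<inverse>) \<le> card Z" using a by blast
  then show "card M' \<le> card (Z\<inverse>)" by simp
qed

lemma edge_g_in: "(if fst e \<in> C then fst e else snd e) \<in> {fst e, snd e}"
  by auto

lemma cover_g_inj:
  assumes mZ: "matching Z"
  shows "inj_on (\<lambda>e. if fst e \<in> C then fst e else snd e) Z"
proof (rule inj_onI)
  fix e e' assume e: "e \<in> Z" "e' \<in> Z" and eq: "(if fst e \<in> C then fst e else snd e) = (if fst e' \<in> C then fst e' else snd e')"
  show "e = e'"
    using matching_unique[OF mZ e, of "if fst e \<in> C then fst e else snd e"] edge_g_in[of e C] edge_g_in[of e' C] eq
    by simp
qed

lemma cover_card:
  assumes mZ: "matching Z" and ZF: "Z \<subseteq> F" and finC: "finite C"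
    and cov: "\<forall>e\<in>F. fst e \<in> C \<or> snd e \<in> C"
  shows "card Z \<le> card C"
proof -
  have "(\<lambda>e. if fst e \<in> C then fst e else snd e) ` Z \<subseteq> C" using cov ZF by auto
  then show ?thesis using card_inj_on_le[OF cover_g_inj[OF mZ]] finC by blast
qed

lemma cover_tight:
  assumes mZ: "matching Z" and ZF: "Z \<subseteq> F" and finC: "finite C"
    and cov: "\<forall>e\<in>F. fst e \<in> C \<or> snd e \<in> C" and finZ: "finite Z"
    and cd: "card Z = card C" and irr: "\<forall>e\<in>Z. fst e \<noteq> snd e"
  shows "C \<subseteq> Vs Z" "\<forall>e\<in>Z. \<not>(fst e \<in> C \<and> snd e \<in> C)"
proof -
  define g where "g e = (if fst e \<in> C then fst e else snd e)" for e :: "'a \<times> 'a"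
  have inj: "inj_on g Z" using cover_g_inj[OF mZ] unfolding g_def .
  have sub: "g ` Z \<subseteq> C" using cov ZF unfolding g_def by auto
  have "card (g ` Z) = card C" using card_image[OF inj] cd by simp
  then have gZ: "g ` Z = C" using card_subset_eq[OF finC sub] by simp
  have gin: "g e \<in> {fst e, snd e}" for e unfolding g_def by auto
  show "C \<subseteq> Vs Z"
  proof
    fix c assume "c \<in> C"
    then obtain e where "e \<in> Z" "c = g e" using gZ by blast
    then show "c \<in> Vs Z" using Vs_I gin by metis
  qed
  show "\<forall>e\<in>Z. \<not>(fst e \<in> C \<and> snd e \<in> C)"
  proof (intro ballI notI)
    fix e assume e: "e \<in> Z" and b: "fst e \<in> C \<and> snd e \<in> C"
    then have ge: "g e = fst e" unfolding g_def by simp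
    obtain e' where e': "e' \<in> Z" "snd e = g e'" using b gZ by blast
    have "snd e \<in> {fst e', snd e'}" using e'(2) gin by metis
    then have "e = e'" using matching_unique[OF mZ e e'(1), of "snd e"] by simp
    then have "snd e = fst e" using e'(2) ge by simp
    then show False using irr e by auto
  qed
qed

lemma max_exists:
  assumes "finite F" shows "\<exists>N. maximum_matching F N"
proof -
  define S where "S = {M. matching M \<and> M \<subseteq> F}"
  have finS: "finite S" unfolding S_def using assms by (auto intro: finite_subset[of _ "Pow F"])
  have "{} \<in> S" unfolding S_def matching_def by simp
  then have ne: "card ` S \<noteq> {}" by blast
  obtain N where N: "N \<in> S" "card N = Max (card ` S)"
    using Max_in[OF finite_imageI[OF finS] ne] by auto
  have "\<forall>M\<in>S. card M \<le> card N"
  proof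
    fix M assume "M \<in> S"
    then have "card M \<in> card ` S" by blast
    then show "card M \<le> card N" using N(2) Max_ge[OF finite_imageI[OF finS]] by metis
  qed
  then show ?thesis using N(1) unfolding S_def maximum_matching_def by blast
qed

lemma smm: "finite F \<Longrightarrow> maximum_matching F (some_max_matching F)"
  unfolding some_max_matching_def using max_exists someI_ex by metis

lemma max_noaug:
  assumes FLR: "F \<subseteq> L \<times> R" and disj: "L \<inter> R = {}" and finF: "finite F"
    and mx: "maximum_matching F Y"
  shows "noaug V F Y"
  unfolding noaug_def
proof
  assume "\<exists>vs. alt_path V F Y vs \<and> even (length vs) \<and> last vs \<notin> Vs Y"
  then obtain vs where "alt_path V F Y vs" "even (length vs)" "last vs \<notin> Vs Y" by blast
  moreover have "matching Y" "Y \<subseteq> F" using mx unfolding maximum_matching_def by auto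
  ultimately obtain W where "matching W" "W \<subseteq> F" "card Y < card W"
    using aug[OF FLR disj finF] by metis
  then show False using mx unfolding maximum_matching_def by force
qed

definition KLs :: "'v set \<Rightarrow> 'v set \<Rightarrow> 'v edges \<Rightarrow> 'v edges \<Rightarrow> 'v set" where
  "KLs V L F Y = (L - EVh V L F Y) \<union> ODh V L F Y"

context
  fixes V L R :: "'v set" and F Y :: "'v edges"
  assumes FLR: "F \<subseteq> L \<times> R" and disj: "L \<inter> R = {}" and VLR: "V = L \<union> R"
    and mY: "matching Y" and YF: "Y \<subseteq> F" and na: "noaug V F Y" and finV: "finite V"
begin

lemma finF: "finite F"
  using FLR finV VLR by (metis finite_SigmaI finite_Un finite_subset)

lemma finK: "finite (KLs V L F Y)"
proof -
  have "ODh V L F Y \<subseteq> R" using EVh_sub(2)[OF FLR disj] .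
  moreover have "finite R" "finite L" using finV VLR by auto
  ultimately show ?thesis unfolding KLs_def using finite_subset by blast
qed

lemma KLs_cover: "(a,p) \<in> F \<Longrightarrow> a \<in> KLs V L F Y \<or> p \<in> KLs V L F Y"
  unfolding KLs_def using K_b[OF FLR disj VLR mY YF na] FLR by blast

lemma KLs_one: "(a,p) \<in> Y \<Longrightarrow> (a \<in> KLs V L F Y \<longleftrightarrow> p \<notin> KLs V L F Y)"
proof -
  assume e: "(a,p) \<in> Y"
  then have aL: "a \<in> L" and pR: "p \<in> R" using YF FLR by auto
  have "a \<notin> ODh V L F Y" using aL disj EVh_sub(2)[OF FLR disj] by blast
  moreover have "p \<notin> L" using pR disj by blast
  moreover have "a \<in> EVh V L F Y \<Longrightarrow> p \<in> ODh V L F Y" using K_b[OF FLR disj VLR mY YF na] e YF by blast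
  moreover have "p \<in> ODh V L F Y \<Longrightarrow> a \<in> EVh V L F Y" using K_c2[OF FLR disj VLR mY YF na] e by blast
  ultimately show ?thesis unfolding KLs_def using aL by blast
qed

lemma KLs_cov: "KLs V L F Y \<subseteq> Vs Y"
  unfolding KLs_def using K_a[OF FLR disj VLR mY YF na] K_c[OF FLR disj VLR mY YF na] by blast

lemma KLs_cover': "\<forall>e\<in>F. fst e \<in> KLs V L F Y \<or> snd e \<in> KLs V L F Y"
  using KLs_cover by auto

lemma KLs_card: "card (KLs V L F Y) = card Y"
proof -
  define K where "K = KLs V L F Y"
  define g where "g e = (if fst e \<in> K then fst e else snd e)" for e :: "'v \<times> 'v"
  have inj: "inj_on g Y" using cover_g_inj[OF mY] unfolding g_def .
  have "g ` Y = K"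
  proof
    show "g ` Y \<subseteq> K" using KLs_cover' YF unfolding g_def K_def by auto
    show "K \<subseteq> g ` Y"
    proof
      fix k assume k: "k \<in> K"
      then have "k \<in> Vs Y" using KLs_cov unfolding K_def by blast
      then obtain e where e: "e \<in> Y" "k \<in> {fst e, snd e}" by (rule Vs_E)
      have one: "fst e \<in> K \<longleftrightarrow> snd e \<notin> K" using KLs_one[of "fst e" "snd e"] e(1) unfolding K_def by simp
      have "g e = k" using e(2) k one unfolding g_def by auto
      then show "k \<in> g ` Y" using e(1) by blast
    qed
  qed
  then show ?thesis using card_image[OF inj] unfolding K_def by simp
qed

lemma noaug_max: "maximum_matching F Y"
  unfolding maximum_matching_def
  using mY YF cover_card[OF _ _ finK KLs_cover'] KLs_card by auto

lemma KLs_tight: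
  assumes mx: "maximum_matching F Z"
  shows "KLs V L F Y \<subseteq> Vs Z" "\<forall>e\<in>Z. \<not>(fst e \<in> KLs V L F Y \<and> snd e \<in> KLs V L F Y)"
proof -
  have mZ: "matching Z" and ZF: "Z \<subseteq> F" using mx unfolding maximum_matching_def by auto
  have "card Z = card Y" using mx noaug_max mY YF mZ ZF unfolding maximum_matching_def by (meson le_antisym)
  then have cd: "card Z = card (KLs V L F Y)" using KLs_card by simp
  have finZ: "finite Z" using finF ZF finite_subset by blast
  have irr: "\<forall>e\<in>Z. fst e \<noteq> snd e" using ZF FLR disj by fastforce
  show "KLs V L F Y \<subseteq> Vs Z" "\<forall>e\<in>Z. \<not>(fst e \<in> KLs V L F Y \<and> snd e \<in> KLs V L F Y)"
    using cover_tight[OF mZ ZF finK KLs_cover' finZ cd irr] by auto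
qed

lemma path_K:
  assumes ap: "alt_path V F Y vs" and hdK: "hd vs \<notin> KLs V L F Y"
  shows "j < length vs \<Longrightarrow> (even j \<longrightarrow> vs!j \<notin> KLs V L F Y) \<and> (odd j \<longrightarrow> vs!j \<in> KLs V L F Y)"
proof (induction j)
  case 0
  have "vs \<noteq> []" using ap unfolding alt_path_def by simp
  then have "vs!0 = hd vs" by (simp add: hd_conv_nth)
  then show ?case using hdK by simp
next
  case (Suc j)
  let ?K = "KLs V L F Y"
  have st: "adj F (vs!j) (vs!Suc j)" "adj Y (vs!j) (vs!Suc j) \<longleftrightarrow> odd j"
    using ap Suc.prems unfolding alt_path_def by auto
  have IH: "(even j \<longrightarrow> vs!j \<notin> ?K) \<and> (odd j \<longrightarrow> vs!j \<in> ?K)" using Suc by simp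
  show ?case
  proof (cases "even j")
    case True
    then have "vs!j \<notin> ?K" using IH by simp
    moreover have "(vs!j, vs!Suc j) \<in> F \<or> (vs!Suc j, vs!j) \<in> F" using st(1) unfolding adj_def .
    ultimately have "vs!Suc j \<in> ?K" using KLs_cover by blast
    then show ?thesis using True by simp
  next
    case False
    then have "vs!j \<in> ?K" using IH by simp
    moreover have "(vs!j, vs!Suc j) \<in> Y \<or> (vs!Suc j, vs!j) \<in> Y" using st(2) False unfolding adj_def by simp
    ultimately have "vs!Suc j \<notin> ?K" using KLs_one by blast
    then show ?thesis using False by simp
  qed
qed

lemma D1: "EVh V L F Y \<inter> ODh V R F Y = {}"
proof (rule ccontr)
  assume "EVh V L F Y \<inter> ODh V R F Y \<noteq> {}"
  then obtain v where v1: "v \<in> EVh V L F Y" and v2: "v \<in> ODh V R F Y" by blast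
  obtain vs where vs: "alt_path V F Y vs" "hd vs \<in> R" "last vs = v" "odd (length vs - 1)"
    using v2 unfolding ODh_def by blast
  have ne: "vs \<noteq> []" and hdY: "hd vs \<notin> Vs Y" using vs(1) unfolding alt_path_def by auto
  have "hd vs \<notin> L" using vs(2) disj by blast
  then have "hd vs \<notin> KLs V L F Y"
    using hdY K_c[OF FLR disj VLR mY YF na] unfolding KLs_def by blast
  then have "vs ! (length vs - 1) \<in> KLs V L F Y" using path_K[OF vs(1)] vs(4) ne by simp
  then have "v \<in> KLs V L F Y" using vs(3) ne by (simp add: last_conv_nth)
  moreover have "v \<in> L" using v1 EVh_sub(1)[OF FLR disj] by blast
  moreover have "ODh V L F Y \<subseteq> R" using EVh_sub(2)[OF FLR disj] .
  ultimately show False using v1 disj unfolding KLs_def by blast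
qed

end



lemma prune_mem: "e \<in> prune V F \<longleftrightarrow> e \<in> F \<and> \<not>((fst e \<in> odd_set V F \<and> snd e \<in> odd_set V F \<union> unr_set V F)
   \<or> (snd e \<in> odd_set V F \<and> fst e \<in> odd_set V F \<union> unr_set V F))"
  unfolding prune_def Let_def by auto

lemma prune_sub: "prune V F \<subseteq> F"
  unfolding prune_def Let_def by auto

lemma odd_sub: "odd_set V F \<subseteq> V" unfolding odd_set_def by auto
lemma even_sub: "even_set V F \<subseteq> V" unfolding even_set_def by auto


context
  fixes V L R :: "'v set" and F :: "'v edges"
  assumes FLR: "F \<subseteq> L \<times> R" and disj: "L \<inter> R = {}" and VLR: "V = L \<union> R" and finV: "finite V"
begin

lemma finF': "finite F"
  using FLR finV VLR by (metis finite_SigmaI finite_Un finite_subset)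

lemma N_max: "maximum_matching F (some_max_matching F)"
  using smm[OF finF'] .

lemma N_m: "matching (some_max_matching F)" "some_max_matching F \<subseteq> F"
  using N_max unfolding maximum_matching_def by auto

lemma N_na: "noaug V F (some_max_matching F)"
  using max_noaug[OF FLR disj finF' N_max] .

lemma FLR': "converse F \<subseteq> R \<times> L" using FLR by auto
lemma disj': "R \<inter> L = {}" using disj by auto
lemma VLR': "V = R \<union> L" using VLR by auto
lemma N_m': "matching (converse (some_max_matching F))" "converse (some_max_matching F) \<subseteq> converse F"
  using N_m by auto
lemma N_na': "noaug V (converse F) (converse (some_max_matching F))"
  using N_na by simp

lemma even_eq: "even_set V F = EVh V L F (some_max_matching F) \<union> EVh V R F (some_max_matching F)"
proof
  show "even_set V F \<subseteq> EVh V L F (some_max_matching F) \<union> EVh V R F (some_max_matching F)"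
  proof
    fix v assume "v \<in> even_set V F"
    then obtain vs where vs: "alt_path V F (some_max_matching F) vs" "last vs = v" "even (length vs - 1)"
      unfolding even_set_def by blast
    have "hd vs \<in> L \<or> hd vs \<in> R" using vs(1) VLR unfolding alt_path_def by auto
    then show "v \<in> EVh V L F (some_max_matching F) \<union> EVh V R F (some_max_matching F)"
      using vs unfolding EVh_def by blast
  qed
  show "EVh V L F (some_max_matching F) \<union> EVh V R F (some_max_matching F) \<subseteq> even_set V F"
  proof
    fix v assume v: "v \<in> EVh V L F (some_max_matching F) \<union> EVh V R F (some_max_matching F)"
    have "EVh V L F (some_max_matching F) \<subseteq> L" using EVh_sub(1)[OF FLR disj] .
    moreover have "EVh V R (converse F) (converse (some_max_matching F)) \<subseteq> R"
      using EVh_sub(1)[OF FLR' disj'] .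
    ultimately have "v \<in> V" using v VLR by auto
    then show "v \<in> even_set V F" using v unfolding EVh_def even_set_def by blast
  qed
qed

lemma odd_eq: "odd_set V F = ODh V L F (some_max_matching F) \<union> ODh V R F (some_max_matching F)"
proof
  show "odd_set V F \<subseteq> ODh V L F (some_max_matching F) \<union> ODh V R F (some_max_matching F)"
  proof
    fix v assume "v \<in> odd_set V F"
    then obtain vs where vs: "alt_path V F (some_max_matching F) vs" "last vs = v" "odd (length vs - 1)"
      unfolding odd_set_def by blast
    have "hd vs \<in> L \<or> hd vs \<in> R" using vs(1) VLR unfolding alt_path_def by auto
    then show "v \<in> ODh V L F (some_max_matching F) \<union> ODh V R F (some_max_matching F)"
      using vs unfolding ODh_def by blast
  qed
  show "ODh V L F (some_max_matching F) \<union> ODh V R F (some_max_matching F) \<subseteq> odd_set V F"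
  proof
    fix v assume v: "v \<in> ODh V L F (some_max_matching F) \<union> ODh V R F (some_max_matching F)"
    have "ODh V L F (some_max_matching F) \<subseteq> R" using EVh_sub(2)[OF FLR disj] .
    moreover have "ODh V R (converse F) (converse (some_max_matching F)) \<subseteq> L"
      using EVh_sub(2)[OF FLR' disj'] .
    ultimately have "v \<in> V" using v VLR by auto
    then show "v \<in> odd_set V F" using v unfolding ODh_def odd_set_def by blast
  qed
qed

lemma eo_disj: "even_set V F \<inter> odd_set V F = {}"
proof -
  let ?N = "some_max_matching F"
  have EL: "EVh V L F ?N \<subseteq> L" and OL: "ODh V L F ?N \<subseteq> R" using EVh_sub[OF FLR disj] by auto
  have ER: "EVh V R F ?N \<subseteq> R" and OR: "ODh V R F ?N \<subseteq> L" using EVh_sub[OF FLR' disj', of V "converse ?N"] by auto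
  have D: "EVh V R F ?N \<inter> ODh V L F ?N = {}" using D1[OF FLR' disj' VLR' N_m' N_na' finV] by simp
  have D': "EVh V L F ?N \<inter> ODh V R F ?N = {}" using D1[OF FLR disj VLR N_m N_na finV] .
  show ?thesis unfolding even_eq odd_eq using EL OL ER OR D D' disj by blast
qed

lemma ou_mem: "v \<in> odd_set V F \<union> unr_set V F \<longleftrightarrow> v \<in> V \<and> v \<notin> even_set V F"
  using odd_sub[of V F] eo_disj unfolding unr_set_def by auto

lemma struct_i:
  assumes mx: "maximum_matching F Z"
  shows "Z \<subseteq> prune V F" "V - even_set V F \<subseteq> Vs Z"
proof -
  let ?N = "some_max_matching F"
  let ?EL = "EVh V L F ?N" and ?ER = "EVh V R F ?N" and ?OL = "ODh V L F ?N" and ?OR = "ODh V R F ?N"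
  have EL: "?EL \<subseteq> L" and OL: "?OL \<subseteq> R" using EVh_sub[OF FLR disj] by auto
  have ER: "?ER \<subseteq> R" and OR: "?OR \<subseteq> L" using EVh_sub[OF FLR' disj', of V "converse ?N"] by auto
  have t1: "KLs V L F ?N \<subseteq> Vs Z" "\<forall>e\<in>Z. \<not>(fst e \<in> KLs V L F ?N \<and> snd e \<in> KLs V L F ?N)"
    using KLs_tight[OF FLR disj VLR N_m N_na finV mx] by auto
  have t2: "KLs V R (converse F) (converse ?N) \<subseteq> Vs Z"
    "\<forall>e\<in>converse Z. \<not>(fst e \<in> KLs V R (converse F) (converse ?N) \<and> snd e \<in> KLs V R (converse F) (converse ?N))"
    using KLs_tight[OF FLR' disj' VLR' N_m' N_na' finV max_conv[OF mx]] by auto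
  have KL: "KLs V L F ?N = (L - ?EL) \<union> ?OL" unfolding KLs_def ..
  have KR: "KLs V R (converse F) (converse ?N) = (R - ?ER) \<union> ?OR" unfolding KLs_def by simp
  have ZF: "Z \<subseteq> F" using mx unfolding maximum_matching_def by auto
  show "V - even_set V F \<subseteq> Vs Z"
  proof
    fix v assume v: "v \<in> V - even_set V F"
    then have "v \<in> L - ?EL \<or> v \<in> R - ?ER" using even_eq VLR by auto
    then show "v \<in> Vs Z" using t1(1) t2(1) KL KR by blast
  qed
  show "Z \<subseteq> prune V F"
  proof
    fix e assume eZ: "e \<in> Z"
    then have eF: "e \<in> F" using ZF by auto
    then have aL: "fst e \<in> L" and pR: "snd e \<in> R" using FLR by auto
    have n1: "\<not>(fst e \<in> KLs V L F ?N \<and> snd e \<in> KLs V L F ?N)" using t1(2) eZ by blast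
    have n2: "\<not>(snd e \<in> KLs V R (converse F) (converse ?N) \<and> fst e \<in> KLs V R (converse F) (converse ?N))"
    proof
      assume b: "snd e \<in> KLs V R (converse F) (converse ?N) \<and> fst e \<in> KLs V R (converse F) (converse ?N)"
      have "(snd e, fst e) \<in> converse Z" using eZ by (cases e) auto
      from bspec[OF t2(2) this] show False using b by simp
    qed
    have "\<not>(fst e \<in> odd_set V F \<and> snd e \<in> odd_set V F \<union> unr_set V F)"
    proof
      assume a: "fst e \<in> odd_set V F \<and> snd e \<in> odd_set V F \<union> unr_set V F"
      then have "fst e \<in> ?OR" using odd_eq aL OL disj by auto
      moreover have "snd e \<notin> ?ER" using a ou_mem even_eq by blast
      ultimately show False using n2 KR pR by blast
    qed
    moreover have "\<not>(snd e \<in> odd_set V F \<and> fst e \<in> odd_set V F \<union> unr_set V F)"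
    proof
      assume a: "snd e \<in> odd_set V F \<and> fst e \<in> odd_set V F \<union> unr_set V F"
      then have "snd e \<in> ?OL" using odd_eq pR OR disj by auto
      moreover have "fst e \<notin> ?EL" using a ou_mem even_eq by blast
      ultimately show False using n1 KL aL by blast
    qed
    ultimately show "e \<in> prune V F" using prune_mem eF by blast
  qed
qed

lemma struct_ii:
  assumes mX: "matching X" and XP: "X \<subseteq> prune V F" and cov: "V - even_set V F \<subseteq> Vs X"
  shows "maximum_matching F X"
proof -
  let ?N = "some_max_matching F"
  let ?EL = "EVh V L F ?N" and ?ER = "EVh V R F ?N" and ?OL = "ODh V L F ?N" and ?OR = "ODh V R F ?N"
  let ?K = "KLs V L F ?N"
  have EL: "?EL \<subseteq> L" and OL: "?OL \<subseteq> R" using EVh_sub[OF FLR disj] by auto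
  have ER: "?ER \<subseteq> R" and OR: "?OR \<subseteq> L" using EVh_sub[OF FLR' disj', of V "converse ?N"] by auto
  have D: "?ER \<inter> ?OL = {}" using D1[OF FLR' disj' VLR' N_m' N_na' finV] by simp
  have XF: "X \<subseteq> F" using XP prune_sub by blast
  have finX: "finite X" using finF' XF finite_subset by blast
  define g where "g e = (if fst e \<in> ?K then fst e else snd e)" for e :: "'v \<times> 'v"
  have "?K \<subseteq> g ` X"
  proof
    fix k assume k: "k \<in> ?K"
    then have "k \<in> V - even_set V F" using EL OL ER D disj VLR even_eq unfolding KLs_def by blast
    then have "k \<in> Vs X" using cov by blast
    then obtain e where e: "e \<in> X" "k \<in> {fst e, snd e}" by (rule Vs_E)
    then have eF: "e \<in> prune V F" using XP by blast
    have eF2: "e \<in> F" using eF prune_sub by blast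
    have "fst e \<in> L \<and> snd e \<in> R" using eF2 FLR by (cases e) auto
    then have aL: "fst e \<in> L" and pR: "snd e \<in> R" by auto
    have "\<not>(fst e \<in> ?K \<and> snd e \<in> ?K)"
    proof
      assume b: "fst e \<in> ?K \<and> snd e \<in> ?K"
      then have "fst e \<in> L - ?EL" using OL aL disj unfolding KLs_def by blast
      then have "fst e \<in> odd_set V F \<union> unr_set V F" using ou_mem even_eq ER disj VLR by blast
      moreover have "snd e \<in> ?OL" using b pR disj unfolding KLs_def by blast
      then have "snd e \<in> odd_set V F" using odd_eq by blast
      ultimately show False using eF prune_mem by blast
    qed
    then have "g e = k" using e(2) k unfolding g_def by auto
    then show "k \<in> g ` X" using e(1) by blast
  qed
  then have "card ?K \<le> card (g ` X)" using finX by (simp add: card_mono)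
  also have "\<dots> \<le> card X" using finX card_image_le by blast
  finally have "card ?N \<le> card X" using KLs_card[OF FLR disj VLR N_m N_na finV] by simp
  then show ?thesis using N_max mX XF unfolding maximum_matching_def by auto
qed

lemma struct_iii:
  assumes mX: "matching X" and XF: "X \<subseteq> F" and nmx: "\<not> maximum_matching F X"
  shows "\<exists>W. matching W \<and> W \<subseteq> F \<and> card X < card W \<and> Vs X \<subseteq> Vs W"
proof -
  have "\<not> noaug V F X" using noaug_max[OF FLR disj VLR mX XF _ finV] nmx by blast
  then obtain vs where "alt_path V F X vs" "even (length vs)" "last vs \<notin> Vs X"
    unfolding noaug_def by blast
  then show ?thesis using aug[OF FLR disj finF' mX XF] by blast
qed

end



lemma lex_irrefl: "\<not> lex_greater f f"
  unfolding lex_greater_def by auto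

lemma lex_trans: "lex_greater f g \<Longrightarrow> lex_greater g h \<Longrightarrow> lex_greater f h"
  unfolding lex_greater_def
proof -
  assume "\<exists>i. g i < f i \<and> (\<forall>j<i. f j = g j)" "\<exists>i. h i < g i \<and> (\<forall>j<i. g j = h j)"
  then obtain i1 i2 where a: "g i1 < f i1" "\<forall>j<i1. f j = g j" and b: "h i2 < g i2" "\<forall>j<i2. g j = h j"
    by blast
  show "\<exists>i. h i < f i \<and> (\<forall>j<i. f j = h j)"
  proof (cases "i1 < i2")
    case True then show ?thesis using a b by (intro exI[of _ i1]) auto
  next
    case False
    show ?thesis
    proof (cases "i1 = i2")
      case True then show ?thesis using a b by (intro exI[of _ i1]) auto
    next
      case False
      then have "i2 < i1" using \<open>\<not> i1 < i2\<close> by simp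
      then show ?thesis using a b by (intro exI[of _ i2]) auto
    qed
  qed
qed

lemma lex_total: "f \<noteq> g \<Longrightarrow> lex_greater f g \<or> lex_greater g f"
proof -
  assume "f \<noteq> g"
  then have ex: "\<exists>i. f i \<noteq> g i" by (auto intro: ext)
  define i where "i = (LEAST i. f i \<noteq> g i)"
  have fi: "f i \<noteq> g i" unfolding i_def using LeastI_ex[OF ex] .
  have lt: "\<forall>j<i. f j = g j" unfolding i_def using not_less_Least by blast
  show ?thesis
  proof (cases "f i < g i")
    case True then show ?thesis unfolding lex_greater_def using lt by (intro disjI2 exI[of _ i]) auto
  next
    case False then have "g i < f i" using fi by simp
    then show ?thesis unfolding lex_greater_def using lt by (intro disjI1 exI[of _ i]) auto
  qed
qed

lemma rm_exists:
  assumes finE: "finite Ed" shows "\<exists>X. rank_maximal Ed rk X"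
proof -
  define S where "S = {M. matching M \<and> M \<subseteq> Ed}"
  have finS: "finite S" unfolding S_def using finE by (auto intro: finite_subset[of _ "Pow Ed"])
  have eS: "{} \<in> S" unfolding S_def matching_def by simp
  define rel where "rel = {(Z, X). Z \<in> S \<and> X \<in> S \<and> lex_greater (signature rk Z) (signature rk X)}"
  have finrel: "finite rel"
  proof -
    have "rel \<subseteq> S \<times> S" unfolding rel_def by auto
    then show ?thesis using finite_cartesian_product[OF finS finS] finite_subset by blast
  qed
  have tr: "trans rel" unfolding rel_def trans_def using lex_trans by blast
  have "acyclic rel"
    unfolding acyclic_def
  proof
    fix x
    show "(x, x) \<notin> rel\<^sup>+" using tr lex_irrefl unfolding trancl_id[OF tr] rel_def by auto
  qed
  then have wfr: "wf rel" using finite_acyclic_wf finrel by blast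
  obtain X where X: "X \<in> S" "\<forall>y. (y, X) \<in> rel \<longrightarrow> y \<notin> S"
    using wfE_min[OF wfr eS] by metis
  have "rank_maximal Ed rk X"
    unfolding rank_maximal_def
  proof (intro conjI allI impI)
    show "matching X" "X \<subseteq> Ed" using X(1) unfolding S_def by auto
    fix M' assume "matching M' \<and> M' \<subseteq> Ed"
    then have "M' \<in> S" unfolding S_def by simp
    then show "\<not> lex_greater (signature rk M') (signature rk X)" using X unfolding rel_def by blast
  qed
  then show ?thesis by blast
qed

lemma rm_sig_eq:
  assumes "rank_maximal Ed rk X" "rank_maximal Ed rk X'"
  shows "signature rk X = signature rk X'"
  using assms lex_total unfolding rank_maximal_def by blast

lemma rm_same_sig:
  assumes "rank_maximal Ed rk X" "matching X'" "X' \<subseteq> Ed" "signature rk X' = signature rk X"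
  shows "rank_maximal Ed rk X'"
  using assms unfolding rank_maximal_def by simp

definition Gr :: "'v edges \<Rightarrow> ('v \<times> 'v \<Rightarrow> nat) \<Rightarrow> nat \<Rightarrow> 'v edges" where
  "Gr E rk i = {e \<in> E. rk e \<le> i}"

lemma sig_low: "m \<le> i \<Longrightarrow> signature rk X m = signature rk {e\<in>X. rk e \<le> i} m"
  unfolding signature_def by (rule arg_cong[where f=card]) auto

lemma sig_high: "X \<subseteq> Gr E rk j \<Longrightarrow> j < m \<Longrightarrow> signature rk X m = 0"
  unfolding signature_def Gr_def by (auto simp: card_eq_0_iff)

lemma sig_top:
  assumes "X \<subseteq> Gr E rk (Suc i)" "finite X"
  shows "signature rk X (Suc i) = card X - card {e\<in>X. rk e \<le> i}"
proof -
  have "X = {e\<in>X. rk e \<le> i} \<union> {e\<in>X. rk e = Suc i}" using assms(1) unfolding Gr_def by auto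
  moreover have "{e\<in>X. rk e \<le> i} \<inter> {e\<in>X. rk e = Suc i} = {}" by auto
  ultimately have "card X = card {e\<in>X. rk e \<le> i} + card {e\<in>X. rk e = Suc i}"
    using assms(2) by (metis (no_types, lifting) card_Un_disjoint finite_Un)
  then show ?thesis unfolding signature_def by simp
qed

lemma prefix_rm:
  assumes ji: "j \<le> i" and rm: "rank_maximal (Gr E rk i) rk X"
  shows "rank_maximal (Gr E rk j) rk {e\<in>X. rk e \<le> j}"
  unfolding rank_maximal_def
proof (intro conjI allI impI)
  have mX: "matching X" and XG: "X \<subseteq> Gr E rk i" using rm unfolding rank_maximal_def by auto
  show "matching {e\<in>X. rk e \<le> j}" using matching_subset[OF mX] by auto
  show "{e\<in>X. rk e \<le> j} \<subseteq> Gr E rk j" using XG unfolding Gr_def by auto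
  fix Z assume Z: "matching Z \<and> Z \<subseteq> Gr E rk j"
  show "\<not> lex_greater (signature rk Z) (signature rk {e\<in>X. rk e \<le> j})"
  proof
    assume "lex_greater (signature rk Z) (signature rk {e\<in>X. rk e \<le> j})"
    then obtain l where l: "signature rk {e\<in>X. rk e \<le> j} l < signature rk Z l"
      "\<forall>m<l. signature rk Z m = signature rk {e\<in>X. rk e \<le> j} m"
      unfolding lex_greater_def by blast
    have "l \<le> j"
    proof (rule ccontr)
      assume "\<not> l \<le> j"
      then have "signature rk Z l = 0" using sig_high[of Z E rk j l] Z by simp
      then show False using l(1) by simp
    qed
    then have "lex_greater (signature rk Z) (signature rk X)"
      unfolding lex_greater_def using l sig_low[of _ j rk X]
      by (intro exI[of _ l]) auto
    moreover have "Z \<subseteq> Gr E rk i" using Z ji unfolding Gr_def by auto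
    ultimately show False using rm Z unfolding rank_maximal_def by blast
  qed
qed

lemma irv_sub: "fst (irv V E rk i) \<subseteq> Gr E rk i"
proof (induction i)
  case 0 then show ?case by simp
next
  case (Suc i)
  have "prune V (fst (irv V E rk i)) \<subseteq> Gr E rk (Suc i)"
    using prune_sub Suc unfolding Gr_def by fastforce
  then show ?case unfolding Gr_def by (auto simp: Let_def)
qed

lemma irv_Suc_fst: "irving_graph V E rk (Suc i) = prune V (irving_graph V E rk i) \<union>
   {e \<in> E. rk e = Suc i \<and> fst e \<notin> snd (irv V E rk (Suc i)) \<and> snd e \<notin> snd (irv V E rk (Suc i))}"
  unfolding irving_graph_def by (simp add: Let_def)

lemma irv_Suc_snd: "snd (irv V E rk (Suc i)) = snd (irv V E rk i) \<union> odd_set V (irving_graph V E rk i) \<union> unr_set V (irving_graph V E rk i)"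
  unfolding irving_graph_def by (simp add: Let_def)

lemma irv_snd_sub: "snd (irv V E rk i) \<subseteq> V"
proof (induction i)
  case 0 then show ?case by simp
next
  case (Suc i)
  then show ?case unfolding irv_Suc_snd using odd_sub[of V] unfolding unr_set_def by auto
qed

lemma irv_snd_mono: "snd (irv V E rk i) \<subseteq> snd (irv V E rk (Suc i))"
  unfolding irv_Suc_snd by auto

lemma irv_snd_ne: "V - even_set V (irving_graph V E rk i) \<subseteq> snd (irv V E rk (Suc i))"
  unfolding irv_Suc_snd unr_set_def by auto

definition Sset :: "'v set \<Rightarrow> 'v edges \<Rightarrow> ('v \<times> 'v \<Rightarrow> nat) \<Rightarrow> nat \<Rightarrow> 'v edges \<Rightarrow> bool" where
  "Sset V E rk i X \<longleftrightarrow> matching X \<and> X \<subseteq> prune V (irving_graph V E rk i) \<and> snd (irv V E rk (Suc i)) \<subseteq> Vs X"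



context
  fixes V L R :: "'v set" and E :: "'v edges" and rk :: "'v \<times> 'v \<Rightarrow> nat"
  assumes ELR: "E \<subseteq> L \<times> R" and disj: "L \<inter> R = {}" and VLR: "V = L \<union> R" and finV: "finite V"
    and rk1: "\<forall>e\<in>E. 1 \<le> rk e"
begin

lemma finE: "finite E"
  using ELR finV VLR by (metis finite_SigmaI finite_Un finite_subset)

lemma finGr: "finite (Gr E rk i)"
  using finE unfolding Gr_def by simp

lemma GLR: "irving_graph V E rk i \<subseteq> L \<times> R"
  using irv_sub[of V E rk i] ELR unfolding irving_graph_def Gr_def by auto

lemma G_Gr: "irving_graph V E rk i \<subseteq> Gr E rk i"
  using irv_sub[of V E rk i] unfolding irving_graph_def .

lemma Smax: "Sset V E rk i X \<Longrightarrow> maximum_matching (irving_graph V E rk i) X"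
  unfolding Sset_def
  using struct_ii[OF GLR disj VLR finV] irv_snd_ne[of V E rk i] by blast

lemma max_card_eq: "maximum_matching F X \<Longrightarrow> maximum_matching F Y \<Longrightarrow> card X = card Y"
  unfolding maximum_matching_def by (meson le_antisym)

lemma split_low:
  assumes "e \<in> irving_graph V E rk (Suc i)" "rk e \<le> i"
  shows "e \<in> prune V (irving_graph V E rk i)"
  using assms irv_Suc_fst[of V E rk i] by auto

lemma new_avoid:
  assumes "e \<in> irving_graph V E rk (Suc i)" "v \<in> snd (irv V E rk (Suc i))" "v \<in> {fst e, snd e}"
  shows "e \<in> prune V (irving_graph V E rk i)"
  using assms irv_Suc_fst[of V E rk i] by auto

lemma prune_Gr: "e \<in> prune V (irving_graph V E rk i) \<Longrightarrow> rk e \<le> i"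
  using prune_sub G_Gr unfolding Gr_def by blast

lemma inv: "\<forall>X. rank_maximal (Gr E rk i) rk X \<longleftrightarrow> Sset V E rk i X"
proof (induction i)
  case 0
  have Gr0: "Gr E rk 0 = {}" using rk1 unfolding Gr_def by fastforce
  have G0: "irving_graph V E rk 0 = {}" unfolding irving_graph_def by simp
  have p0: "prune V {} = {}" using prune_sub by blast
  have mx0: "maximum_matching {} {}" unfolding maximum_matching_def matching_def by auto
  have e0: "V - even_set V {} = {}" using struct_i(2)[of "{}" L R V "{}"] mx0 disj VLR finV
    unfolding Vs_def by auto
  have o0: "odd_set V {} = {}" using eo_disj[of "{}" L R V] e0 disj VLR finV odd_sub[of V "{}"] by blast
  have "snd (irv V E rk (Suc 0)) = {}"
    unfolding irv_Suc_snd G0 using e0 o0 unfolding unr_set_def by simp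
  then have S0: "Sset V E rk 0 X \<longleftrightarrow> X = {}" for X
    unfolding Sset_def G0 p0 by (auto simp: matching_def)
  have "rank_maximal {} rk X \<longleftrightarrow> X = {}" for X
    unfolding rank_maximal_def using lex_irrefl by (auto simp: matching_def)
  then show ?case using S0 Gr0 by simp
next
  case (Suc i)
  note IH = Suc[rule_format]
  define G where "G = irving_graph V E rk i"
  define G1 where "G1 = irving_graph V E rk (Suc i)"
  define Fc where "Fc = snd (irv V E rk (Suc i))"
  have G1LR: "G1 \<subseteq> L \<times> R" unfolding G1_def using GLR .
  have G1Gr: "G1 \<subseteq> Gr E rk (Suc i)" unfolding G1_def using G_Gr .
  have RM1: "Sset V E rk (Suc i) X" if rm: "rank_maximal (Gr E rk (Suc i)) rk X" for X
  proof -
    have mX: "matching X" and XG: "X \<subseteq> Gr E rk (Suc i)" using rm unfolding rank_maximal_def by auto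
    have finX: "finite X" using finGr XG finite_subset by blast
    define X' where "X' = {e\<in>X. rk e \<le> i}"
    have rm': "rank_maximal (Gr E rk i) rk X'" unfolding X'_def using prefix_rm[OF _ rm] by simp
    then have S': "Sset V E rk i X'" using IH by blast
    then have mX': "matching X'" and X'P: "X' \<subseteq> prune V G" and FcX': "Fc \<subseteq> Vs X'"
      unfolding Sset_def G_def Fc_def by auto
    have X'X: "X' \<subseteq> X" unfolding X'_def by auto
    have XG1: "X \<subseteq> G1"
    proof
      fix e assume eX: "e \<in> X"
      show "e \<in> G1"
      proof (cases "rk e \<le> i")
        case True
        then have "e \<in> prune V G" using X'P eX unfolding X'_def by blast
        then show ?thesis unfolding G1_def G_def using irv_Suc_fst[of V E rk i] by blast
      next
        case False
        then have r: "rk e = Suc i" "e \<in> E" using XG eX unfolding Gr_def by auto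
        have nF: "v \<notin> Fc" if v: "v \<in> {fst e, snd e}" for v
        proof
          assume "v \<in> Fc"
          then have "v \<in> Vs X'" using FcX' by blast
          then obtain e' where e': "e' \<in> X'" "v \<in> {fst e', snd e'}" by (rule Vs_E)
          then have "e = e'" using matching_unique[OF mX eX _ v e'(2)] X'X by blast
          then show False using e'(1) False unfolding X'_def by simp
        qed
        have "fst e \<notin> Fc" "snd e \<notin> Fc" using nF by auto
        then have "e \<in> {e \<in> E. rk e = Suc i \<and> fst e \<notin> Fc \<and> snd e \<notin> Fc}" using r by simp
        then show ?thesis unfolding G1_def using irv_Suc_fst[of V E rk i] unfolding Fc_def by blast
      qed
    qed
    have mxX: "maximum_matching G1 X"
    proof (rule ccontr)
      assume nm: "\<not> maximum_matching G1 X"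
      have "\<exists>W. matching W \<and> W \<subseteq> G1 \<and> card X < card W \<and> Vs X \<subseteq> Vs W"
        by (rule struct_iii[OF G1LR disj VLR finV mX XG1 nm])
      then obtain W where W: "matching W" "W \<subseteq> G1" "card X < card W" "Vs X \<subseteq> Vs W"
        by (elim exE conjE)
      have WGr: "W \<subseteq> Gr E rk (Suc i)" using W(2) G1Gr by (rule subset_trans)
      have finW: "finite W" using WGr finGr by (rule finite_subset)
      define W' where "W' = {e\<in>W. rk e \<le> i}"
      have SW': "Sset V E rk i W'"
        unfolding Sset_def
      proof (intro conjI)
        show "matching W'" using matching_subset[OF W(1)] unfolding W'_def by auto
        show "W' \<subseteq> prune V (irving_graph V E rk i)"
          using W(2) split_low unfolding W'_def G1_def by blast
        show "snd (irv V E rk (Suc i)) \<subseteq> Vs W'"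
        proof
          fix v assume v: "v \<in> snd (irv V E rk (Suc i))"
          then have "v \<in> Vs W" using FcX' Vs_mono[OF X'X] W(4) unfolding Fc_def by blast
          then obtain e where e: "e \<in> W" "v \<in> {fst e, snd e}" by (rule Vs_E)
          then have "e \<in> prune V (irving_graph V E rk i)" using new_avoid v W(2) unfolding G1_def by blast
          then have "e \<in> W'" using prune_Gr e(1) unfolding W'_def by blast
          then show "v \<in> Vs W'" using Vs_I e(2) by metis
        qed
      qed
      have rmW': "rank_maximal (Gr E rk i) rk W'" using SW' IH by blast
      have sigeq: "signature rk W' = signature rk X'" using rm_sig_eq[OF rmW' rm'] .
      have ceq: "card W' = card X'" using max_card_eq[OF Smax[OF SW'] Smax[OF S']] .
      have W'W: "W' \<subseteq> W" unfolding W'_def by auto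
      have c1: "card X' \<le> card X" using card_mono[OF finX X'X] .
      have c2: "card W' \<le> card W" using card_mono[OF finW W'W] .
      have "signature rk X (Suc i) < signature rk W (Suc i)"
        using sig_top[OF XG finX] sig_top[OF subset_trans[OF W(2) G1Gr] finW] W(3) ceq c1 c2
        unfolding X'_def W'_def by simp
      moreover have "\<forall>m<Suc i. signature rk W m = signature rk X m"
      proof (intro allI impI)
        fix m assume "m < Suc i"
        then have "m \<le> i" by simp
        then show "signature rk W m = signature rk X m"
          using sig_low[of m i rk W] sig_low[of m i rk X] sigeq unfolding X'_def W'_def by simp
      qed
      ultimately have "lex_greater (signature rk W) (signature rk X)"
        unfolding lex_greater_def by blast
      moreover have "W \<subseteq> Gr E rk (Suc i)" using W(2) G1Gr by blast
      ultimately show False using rm W(1) unfolding rank_maximal_def by blast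
    qed
    have a: "X \<subseteq> prune V G1" "V - even_set V G1 \<subseteq> Vs X"
      using struct_i[OF G1LR disj VLR finV mxX] by auto
    have "snd (irv V E rk (Suc (Suc i))) \<subseteq> Vs X"
    proof -
      have "snd (irv V E rk (Suc (Suc i))) = Fc \<union> (odd_set V G1 \<union> unr_set V G1)"
        unfolding irv_Suc_snd[of V E rk "Suc i"] Fc_def G1_def by auto
      moreover have "odd_set V G1 \<union> unr_set V G1 \<subseteq> V - even_set V G1"
        using ou_mem[OF G1LR disj VLR finV] by blast
      ultimately show ?thesis using a(2) FcX' Vs_mono[OF X'X] by blast
    qed
    then show ?thesis unfolding Sset_def using mX a(1) unfolding G1_def by blast
  qed
  have RM2: "rank_maximal (Gr E rk (Suc i)) rk X" if S: "Sset V E rk (Suc i) X" for X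
  proof -
    have mX: "matching X" and XP: "X \<subseteq> prune V G1" and cov: "snd (irv V E rk (Suc (Suc i))) \<subseteq> Vs X"
      using S unfolding Sset_def G1_def by auto
    have XG1: "X \<subseteq> G1" using XP prune_sub by blast
    have XG: "X \<subseteq> Gr E rk (Suc i)" using XG1 G1Gr by blast
    have finX: "finite X" using finGr XG finite_subset by blast
    define X' where "X' = {e\<in>X. rk e \<le> i}"
    have X'X: "X' \<subseteq> X" unfolding X'_def by auto
    have S': "Sset V E rk i X'"
      unfolding Sset_def
    proof (intro conjI)
      show "matching X'" using matching_subset[OF mX X'X] .
      show "X' \<subseteq> prune V (irving_graph V E rk i)"
        using XG1 split_low unfolding X'_def G1_def by blast
      show "snd (irv V E rk (Suc i)) \<subseteq> Vs X'"
      proof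
        fix v assume v: "v \<in> snd (irv V E rk (Suc i))"
        then have "v \<in> Vs X" using cov irv_snd_mono[of V E rk "Suc i"] by blast
        then obtain e where e: "e \<in> X" "v \<in> {fst e, snd e}" by (rule Vs_E)
        then have "e \<in> prune V (irving_graph V E rk i)" using new_avoid v XG1 unfolding G1_def by blast
        then have "e \<in> X'" using prune_Gr e(1) unfolding X'_def by blast
        then show "v \<in> Vs X'" using Vs_I e(2) by metis
      qed
    qed
    have rm': "rank_maximal (Gr E rk i) rk X'" using S' IH by blast
    obtain Rs where Rs: "rank_maximal (Gr E rk (Suc i)) rk Rs" using rm_exists[OF finGr] by blast
    have SRs: "Sset V E rk (Suc i) Rs" using RM1[OF Rs] .
    have mRs: "matching Rs" and RsG: "Rs \<subseteq> Gr E rk (Suc i)" using Rs unfolding rank_maximal_def by auto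
    have finRs: "finite Rs" using finGr RsG finite_subset by blast
    have c: "card X = card Rs" using max_card_eq[OF Smax[OF S] Smax[OF SRs]] .
    define Rs' where "Rs' = {e\<in>Rs. rk e \<le> i}"
    have rmRs': "rank_maximal (Gr E rk i) rk Rs'" unfolding Rs'_def using prefix_rm[OF _ Rs] by simp
    have SRs': "Sset V E rk i Rs'" using rmRs' IH by blast
    have c': "card X' = card Rs'" using max_card_eq[OF Smax[OF S'] Smax[OF SRs']] .
    have sig': "signature rk X' = signature rk Rs'" using rm_sig_eq[OF rm' rmRs'] .
    have "signature rk X = signature rk Rs"
    proof
      fix m
      consider "m \<le> i" | "m = Suc i" | "Suc i < m" by linarith
      then show "signature rk X m = signature rk Rs m"
      proof cases
        case 1 then show ?thesis
          using sig_low[of m i rk X] sig_low[of m i rk Rs] sig' unfolding X'_def Rs'_def by simp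
      next
        case 2 then show ?thesis
          using sig_top[OF XG finX] sig_top[OF RsG finRs] c c' unfolding X'_def Rs'_def by simp
      next
        case 3 then show ?thesis using sig_high[OF XG] sig_high[OF RsG] by simp
      qed
    qed
    then show ?thesis using rm_same_sig[OF Rs mX XG] by simp
  qed
  show ?case using RM1 RM2 by blast
qed

end



lemma matching_insert:
  assumes m: "matching N" and u: "u \<notin> Vs N" and v: "v \<notin> Vs N"
  shows "matching (insert (u,v) N)"
  unfolding matching_def
proof (intro ballI impI)
  fix e e' assume e: "e \<in> insert (u,v) N" and e': "e' \<in> insert (u,v) N" and ne: "e \<noteq> e'"
  show "{fst e, snd e} \<inter> {fst e', snd e'} = {}"
  proof (cases "e = (u,v)")
    case True
    then have "e' \<in> N" using e' ne by auto
    then have "fst e' \<in> Vs N" "snd e' \<in> Vs N" using Vs_I by (metis insertI1, metis insert_commute insertI1)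
    then show ?thesis using True u v by auto
  next
    case False
    then have eN: "e \<in> N" using e by auto
    then have f: "fst e \<in> Vs N" "snd e \<in> Vs N" using Vs_I by (metis insertI1, metis insert_commute insertI1)
    show ?thesis
    proof (cases "e' = (u,v)")
      case True then show ?thesis using f u v by auto
    next
      case False
      then have "e' \<in> N" using e' by auto
      then show ?thesis using m eN ne unfolding matching_def by blast
    qed
  qed
qed

lemma Vs_prod: "Y \<subseteq> S \<times> T \<Longrightarrow> Vs Y \<subseteq> S \<union> T"
  unfolding Vs_def by auto

lemma matching_union:
  assumes m1: "matching N" and m2: "matching Y" and d: "Vs N \<inter> Vs Y = {}"
  shows "matching (N \<union> Y)"
  unfolding matching_def
proof (intro ballI impI)
  fix e e' assume e: "e \<in> N \<union> Y" and e': "e' \<in> N \<union> Y" and ne: "e \<noteq> e'"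
  have cr: "{fst f, snd f} \<inter> {fst f', snd f'} = {}" if f: "f \<in> N" and f': "f' \<in> Y" for f f'
  proof (rule ccontr)
    assume "{fst f, snd f} \<inter> {fst f', snd f'} \<noteq> {}"
    then obtain x where x: "x \<in> {fst f, snd f}" "x \<in> {fst f', snd f'}" by blast
    have "x \<in> Vs N" using Vs_I[OF f x(1)] .
    moreover have "x \<in> Vs Y" using Vs_I[OF f' x(2)] .
    ultimately show False using d by blast
  qed
  show "{fst e, snd e} \<inter> {fst e', snd e'} = {}"
  proof (cases "e \<in> N")
    case True
    show ?thesis
    proof (cases "e' \<in> N")
      case True then show ?thesis using \<open>e \<in> N\<close> m1 ne unfolding matching_def by blast
    next
      case False then have "e' \<in> Y" using e' by auto
      then show ?thesis using cr[OF \<open>e \<in> N\<close>] by blast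
    qed
  next
    case False
    then have eY: "e \<in> Y" using e by auto
    show ?thesis
    proof (cases "e' \<in> N")
      case True then show ?thesis using cr[OF _ eY] by blast
    next
      case False then have "e' \<in> Y" using e' by auto
      then show ?thesis using eY m2 ne unfolding matching_def by blast
    qed
  qed
qed

definition PMs :: "'v set \<Rightarrow> 'v set \<Rightarrow> 'v edges set" where
  "PMs D Q = {Y. Y \<subseteq> D \<times> Q \<and> matching Y \<and> card Y = card D}"

lemma inj_fst_matching: "matching Y \<Longrightarrow> inj_on fst Y"
proof (rule inj_onI)
  fix x y assume m: "matching Y" and xy: "x \<in> Y" "y \<in> Y" "fst x = fst y"
  have "fst x \<in> {fst x, snd x}" "fst x \<in> {fst y, snd y}" using xy(3) by auto
  then show "x = y" by (rule matching_unique[OF m xy(1,2)])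
qed

lemma inj_snd_matching: "matching Y \<Longrightarrow> inj_on snd Y"
proof (rule inj_onI)
  fix x y assume m: "matching Y" and xy: "x \<in> Y" "y \<in> Y" "snd x = snd y"
  have "snd x \<in> {fst x, snd x}" "snd x \<in> {fst y, snd y}" using xy(3) by auto
  then show "x = y" by (rule matching_unique[OF m xy(1,2)])
qed

lemma PMs_split:
  assumes dD: "d \<notin> D" and fD: "finite D" and fQ: "finite Q" and disj: "insert d D \<inter> Q = {}"
  shows "PMs (insert d D) Q = (\<Union>q\<in>Q. insert (d,q) ` PMs D (Q - {q}))"
proof
  show "PMs (insert d D) Q \<subseteq> (\<Union>q\<in>Q. insert (d,q) ` PMs D (Q - {q}))"
  proof
    fix Y assume Y: "Y \<in> PMs (insert d D) Q"
    then have YDQ: "Y \<subseteq> insert d D \<times> Q" and mY: "matching Y" and cY: "card Y = card (insert d D)"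
      unfolding PMs_def by auto
    have finY: "finite Y" using YDQ fD fQ finite_subset by (metis finite_SigmaI finite_insert)
    have sub: "fst ` Y \<subseteq> insert d D" using YDQ by auto
    have "card (fst ` Y) = card (insert d D)" using card_image[OF inj_fst_matching[OF mY]] cY by simp
    then have "fst ` Y = insert d D" using card_subset_eq[OF _ sub] fD by simp
    then obtain e where e: "e \<in> Y" "fst e = d" by (metis imageE insertI1)
    obtain q where q: "e = (d,q)" using e(2) by (cases e) auto
    have qQ: "q \<in> Q" using YDQ e(1) q by auto
    define Y0 where "Y0 = Y - {(d,q)}"
    have "Y0 \<subseteq> D \<times> (Q - {q})"
    proof
      fix f assume f: "f \<in> Y0"
      then have fY: "f \<in> Y" and fne: "f \<noteq> (d,q)" unfolding Y0_def by auto
      have "fst f \<noteq> d"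
      proof
        assume "fst f = d"
        then have "f = (d,q)" using matching_unique[OF mY fY _ , of "(d,q)" d] e q by auto
        then show False using fne by simp
      qed
      moreover have "snd f \<noteq> q"
      proof
        assume "snd f = q"
        then have "f = (d,q)" using matching_unique[OF mY fY _ , of "(d,q)" q] e q by auto
        then show False using fne by simp
      qed
      ultimately show "f \<in> D \<times> (Q - {q})" using YDQ fY by (cases f) auto
    qed
    moreover have "matching Y0" using matching_subset[OF mY] unfolding Y0_def by auto
    moreover have "card Y0 = card D" unfolding Y0_def using cY e q finY dD fD by simp
    ultimately have "Y0 \<in> PMs D (Q - {q})" unfolding PMs_def by simp
    moreover have "Y = insert (d,q) Y0" unfolding Y0_def using e q by auto
    ultimately show "Y \<in> (\<Union>q\<in>Q. insert (d,q) ` PMs D (Q - {q}))" using qQ by blast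
  qed
  show "(\<Union>q\<in>Q. insert (d,q) ` PMs D (Q - {q})) \<subseteq> PMs (insert d D) Q"
  proof
    fix Y assume "Y \<in> (\<Union>q\<in>Q. insert (d,q) ` PMs D (Q - {q}))"
    then obtain q Y0 where q: "q \<in> Q" and Y0: "Y0 \<in> PMs D (Q - {q})" and Y: "Y = insert (d,q) Y0" by blast
    have Y0s: "Y0 \<subseteq> D \<times> (Q - {q})" and mY0: "matching Y0" and cY0: "card Y0 = card D"
      using Y0 unfolding PMs_def by auto
    have VY0: "Vs Y0 \<subseteq> D \<union> (Q - {q})" using Vs_prod[OF Y0s] .
    have "d \<notin> Vs Y0" using VY0 dD disj by auto
    moreover have "q \<notin> Vs Y0" using VY0 q disj by auto
    ultimately have "matching Y" unfolding Y using matching_insert[OF mY0] by blast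
    moreover have "Y \<subseteq> insert d D \<times> Q" unfolding Y using Y0s q by auto
    moreover have "(d,q) \<notin> Y0" using Y0s dD by auto
    then have "card Y = card (insert d D)" unfolding Y using cY0 dD fD
      by (metis card_insert_disjoint finite_subset Y0s fQ finite_Diff finite_SigmaI)
    ultimately show "Y \<in> PMs (insert d D) Q" unfolding PMs_def by simp
  qed
qed

lemma card_PMs: "finite D \<Longrightarrow> finite Q \<Longrightarrow> card Q = card D \<Longrightarrow> D \<inter> Q = {} \<Longrightarrow> card (PMs D Q) = fact (card D)"
proof (induction D arbitrary: Q rule: finite_induct)
  case empty
  then have "Q = {}" by simp
  then have "PMs {} Q = {{}}" unfolding PMs_def by (auto simp: matching_def)
  then show ?case by simp
next
  case (insert d D)
  have split: "PMs (insert d D) Q = (\<Union>q\<in>Q. insert (d,q) ` PMs D (Q - {q}))"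
    using PMs_split[OF insert(2,1,4,6)] .
  have each: "card (insert (d,q) ` PMs D (Q - {q})) = fact (card D)" if q: "q \<in> Q" for q
  proof -
    have inj: "inj_on (insert (d,q)) (PMs D (Q - {q}))"
    proof (rule inj_onI)
      fix Y Y' assume "Y \<in> PMs D (Q - {q})" "Y' \<in> PMs D (Q - {q})" "insert (d,q) Y = insert (d,q) Y'"
      moreover have "(d,q) \<notin> Y" "(d,q) \<notin> Y'" using calculation(1,2) insert(2) unfolding PMs_def by auto
      ultimately show "Y = Y'" by (metis insert_ident)
    qed
    have "card (Q - {q}) = card D" using insert(1,2,4,5) q by simp
    moreover have "D \<inter> (Q - {q}) = {}" using insert(6) by auto
    ultimately have "card (PMs D (Q - {q})) = fact (card D)" using insert(3)[of "Q - {q}"] insert(4) by simp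
    then show ?thesis using card_image[OF inj] by simp
  qed
  have fin: "finite (insert (d,q) ` PMs D (Q - {q}))" for q
  proof -
    have "PMs D (Q - {q}) \<subseteq> Pow (D \<times> Q)" unfolding PMs_def by auto
    then have "finite (PMs D (Q - {q}))" using insert(1,4) by (meson finite_Pow_iff finite_SigmaI finite_subset)
    then show ?thesis by simp
  qed
  have dsj: "\<forall>q\<in>Q. \<forall>q'\<in>Q. q \<noteq> q' \<longrightarrow> insert (d,q) ` PMs D (Q - {q}) \<inter> insert (d,q') ` PMs D (Q - {q'}) = {}"
  proof (intro ballI impI)
    fix q q' assume "q \<in> Q" "q' \<in> Q" "q \<noteq> q'"
    show "insert (d,q) ` PMs D (Q - {q}) \<inter> insert (d,q') ` PMs D (Q - {q'}) = {}"
    proof (rule ccontr)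
      assume "insert (d,q) ` PMs D (Q - {q}) \<inter> insert (d,q') ` PMs D (Q - {q'}) \<noteq> {}"
      then obtain Y Y' where "Y' \<in> PMs D (Q - {q'})" "insert (d,q) Y = insert (d,q') Y'" by blast
      then have "(d,q) \<in> insert (d,q') Y'" "Y' \<subseteq> D \<times> (Q - {q'})" unfolding PMs_def by auto
      then show False using \<open>q \<noteq> q'\<close> insert(2) by auto
    qed
  qed
  have "card (PMs (insert d D) Q) = (\<Sum>q\<in>Q. card (insert (d,q) ` PMs D (Q - {q})))"
    unfolding split using card_UN_disjoint[OF insert(4) _ dsj] fin by blast
  also have "\<dots> = card Q * fact (card D)" using each by simp
  also have "\<dots> = fact (card (insert d D))" using insert(1,2,5) by simp
  finally show ?case .
qed



context
  fixes A P0 P D :: "'v set" and E0 E EH :: "'v edges"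
    and rk rkH :: "'v \<times> 'v \<Rightarrow> nat" and r k :: nat and lr :: "'v \<Rightarrow> 'v"
    and M :: "'v edges"
  assumes a1: "finite A" and a2: "finite P0" and a3: "A \<inter> P0 = {}"
    and a4: "E0 \<subseteq> A \<times> P0" and a5: "\<forall>e\<in>E0. rk e \<in> {1..r}"
    and a6: "inj_on lr A" and a7: "lr ` A \<inter> (A \<union> P0) = {}"
    and a8: "P = P0 \<union> lr ` A"
    and a9: "E = E0 \<union> (\<lambda>a. (a, lr a)) ` A"
    and a10: "\<forall>a\<in>A. rk (a, lr a) = r + 1"
    and a11: "rank_maximal E rk M"
    and a12: "k = card (P - Vs M)"
    and a13: "finite D" and a14: "card D = k" and a15: "D \<inter> (A \<union> P) = {}"
    and a16: "EH = E \<union> D \<times> (P \<inter> (\<Inter>i\<in>{1..r+1}. irving_even (A \<union> P) E rk i))"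
    and a17: "\<forall>e\<in>E. rkH e = rk e"
    and a18: "\<forall>e\<in>EH - E. rkH e = r + 2"
begin

lemma finP: "finite P" using a2 a1 a8 by simp
lemma disjAP: "A \<inter> P = {}" using a3 a7 a8 by auto
lemma ELR: "E \<subseteq> A \<times> P" using a4 a9 a8 by auto
lemma finV: "finite (A \<union> P)" using a1 finP by simp
lemma rk1: "\<forall>e\<in>E. 1 \<le> rk e" using a5 a9 a10 by auto
lemma rkle: "\<forall>e\<in>E. rk e \<le> r + 1" using a5 a9 a10 by auto
lemma finE_G: "finite E" using ELR a1 finP by (metis finite_SigmaI finite_subset)
lemma GrE: "Gr E rk (r+1) = E" unfolding Gr_def using rkle by auto

lemma invG: "rank_maximal (Gr E rk i) rk X \<longleftrightarrow> Sset (A \<union> P) E rk i X"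
  using inv[OF ELR disjAP refl finV rk1] by blast

lemma EH_LR: "EH \<subseteq> (A \<union> D) \<times> P" using a16 ELR by auto
lemma disjH: "(A \<union> D) \<inter> P = {}" using disjAP a15 by auto
lemma finVH: "finite (A \<union> D \<union> P)" using a1 a13 finP by simp
lemma rk1H: "\<forall>e\<in>EH. 1 \<le> rkH e"
proof
  fix e assume "e \<in> EH"
  then show "1 \<le> rkH e" using a17 a18 rk1 by (cases "e \<in> E") auto
qed
lemma GrH: "Gr EH rkH (r+2) = EH"
proof -
  have "\<forall>e\<in>EH. rkH e \<le> r + 2"
  proof
    fix e assume "e \<in> EH"
    then show "rkH e \<le> r + 2" using a17 a18 rkle by (cases "e \<in> E") auto
  qed
  then show ?thesis unfolding Gr_def by auto
qed

lemma invH: "rank_maximal (Gr EH rkH i) rkH X \<longleftrightarrow> Sset (A \<union> D \<union> P) EH rkH i X"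
  using inv[OF EH_LR disjH refl finVH rk1H] by blast

lemma P1:
  assumes rm: "rank_maximal E rk N"
  shows "P - Vs N \<subseteq> P \<inter> (\<Inter>i\<in>{1..r+1}. irving_even (A \<union> P) E rk i)"
proof
  fix p assume p: "p \<in> P - Vs N"
  have "p \<in> irving_even (A \<union> P) E rk i" if i: "i \<in> {1..r+1}" for i
  proof -
    have "rank_maximal (Gr E rk i) rk {e\<in>N. rk e \<le> i}"
      using prefix_rm[of i "r+1" E rk N] i rm GrE by simp
    then have "snd (irv (A \<union> P) E rk (Suc i)) \<subseteq> Vs {e\<in>N. rk e \<le> i}"
      using invG unfolding Sset_def by blast
    moreover have "Vs {e\<in>N. rk e \<le> i} \<subseteq> Vs N" by (rule Vs_mono) auto
    ultimately have "p \<notin> snd (irv (A \<union> P) E rk (Suc i))" using p by blast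
    then have "p \<in> even_set (A \<union> P) (irving_graph (A \<union> P) E rk i)"
      using irv_snd_ne[of "A \<union> P" E rk i] p by blast
    then show ?thesis unfolding irving_even_def .
  qed
  then show "p \<in> P \<inter> (\<Inter>i\<in>{1..r+1}. irving_even (A \<union> P) E rk i)" using p by blast
qed

lemma lr_notVs:
  assumes NE: "N \<subseteq> E" and a: "a \<in> A" and aN: "a \<notin> Vs N"
  shows "lr a \<notin> Vs N"
proof
  assume "lr a \<in> Vs N"
  then obtain e where e: "e \<in> N" "lr a \<in> {fst e, snd e}" by (rule Vs_E)
  have eE: "e \<in> E" using e NE by blast
  have "lr a \<notin> A" "lr a \<notin> P0" using a7 a by auto
  then have "fst e \<noteq> lr a" using eE ELR by auto
  then have s: "snd e = lr a" using e(2) by auto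
  have "e \<notin> E0" using a4 s \<open>lr a \<notin> P0\<close> eE by auto
  then obtain b where b: "b \<in> A" "e = (b, lr b)" using eE a9 by auto
  then have "b = a" using s a6 a unfolding inj_on_def by auto
  then have "a \<in> {fst e, snd e}" using b by simp
  then show False using aN Vs_I[OF e(1)] by blast
qed

lemma allA:
  assumes rm: "rank_maximal E rk N"
  shows "A \<subseteq> Vs N"
proof
  fix a assume a: "a \<in> A"
  show "a \<in> Vs N"
  proof (rule ccontr)
    assume aN: "a \<notin> Vs N"
    have mN: "matching N" and NE: "N \<subseteq> E" using rm unfolding rank_maximal_def by auto
    have finN: "finite N" using finE_G NE by (rule finite_subset[rotated])
    define N2 where "N2 = insert (a, lr a) N"
    have mN2: "matching N2" unfolding N2_def
      using matching_insert[OF mN aN lr_notVs[OF NE a aN]] .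
    have N2E: "N2 \<subseteq> E" unfolding N2_def using NE a a9 by auto
    have nin: "(a, lr a) \<notin> N" using aN Vs_I[of "(a, lr a)" N a] by auto
    have rka: "rk (a, lr a) = r + 1" using a10 a by blast
    have low: "signature rk N2 m = signature rk N m" if "m \<noteq> r + 1" for m
      unfolding signature_def N2_def using rka that by (auto intro: arg_cong[where f=card])
    have "{e \<in> N2. rk e = r + 1} = insert (a, lr a) {e \<in> N. rk e = r + 1}"
      unfolding N2_def using rka by auto
    then have "signature rk N2 (r+1) = Suc (signature rk N (r+1))"
      unfolding signature_def using nin finN by simp
    then have "lex_greater (signature rk N2) (signature rk N)"
      unfolding lex_greater_def using low by (intro exI[of _ "r+1"]) auto
    then show False using rm mN2 N2E unfolding rank_maximal_def by blast
  qed
qed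

lemma cardN:
  assumes rm: "rank_maximal E rk N"
  shows "card N = card A" "card (P - Vs N) = card P - card A" "card A \<le> card P"
proof -
  have mN: "matching N" and NE: "N \<subseteq> E" using rm unfolding rank_maximal_def by auto
  have finN: "finite N" using finE_G NE by (rule finite_subset[rotated])
  have "fst ` N = A"
  proof
    show "fst ` N \<subseteq> A" using NE ELR by auto
    show "A \<subseteq> fst ` N"
    proof
      fix a assume a: "a \<in> A"
      then have "a \<in> Vs N" using allA[OF rm] by blast
      then obtain e where e: "e \<in> N" "a \<in> {fst e, snd e}" by (rule Vs_E)
      have "snd e \<in> P" using e(1) NE ELR by auto
      then have "a = fst e" using e(2) a disjAP by auto
      then show "a \<in> fst ` N" using e(1) by blast
    qed
  qed
  then show c1: "card N = card A" using card_image[OF inj_fst_matching[OF mN]] by simp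
  have "P \<inter> Vs N = snd ` N"
  proof
    show "P \<inter> Vs N \<subseteq> snd ` N"
    proof
      fix p assume p: "p \<in> P \<inter> Vs N"
      then obtain e where e: "e \<in> N" "p \<in> {fst e, snd e}" by (meson IntD2 Vs_E)
      have "fst e \<in> A" using e(1) NE ELR by auto
      then have "p = snd e" using e(2) p disjAP by auto
      then show "p \<in> snd ` N" using e(1) by blast
    qed
    show "snd ` N \<subseteq> P \<inter> Vs N"
    proof
      fix p assume "p \<in> snd ` N"
      then obtain e where e: "e \<in> N" "p = snd e" by blast
      then have "p \<in> P" using NE ELR by auto
      moreover have "p \<in> Vs N" using Vs_I[OF e(1)] e(2) by simp
      ultimately show "p \<in> P \<inter> Vs N" by blast
    qed
  qed
  then have c2: "card (P \<inter> Vs N) = card A" using card_image[OF inj_snd_matching[OF mN]] c1 by simp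
  have "P - Vs N = P - (P \<inter> Vs N)" by blast
  then show "card (P - Vs N) = card P - card A" using c2 finP by (simp add: card_Diff_subset)
  show "card A \<le> card P" using c2 finP card_mono[of P "P \<inter> Vs N"] by simp
qed

lemma k_eq: "k = card P - card A" using cardN(2)[OF a11] a12 by simp

definition fsel :: "'v set \<Rightarrow> 'v edges \<Rightarrow> 'v edges" where
  "fsel S X = {e\<in>X. fst e \<in> S}"

lemma split_H:
  assumes XH: "X \<subseteq> EH"
  shows "fsel A X \<subseteq> E" "fsel D X \<inter> E = {}" "X = fsel A X \<union> fsel D X" "fsel A X \<inter> fsel D X = {}"
proof -
  show "fsel A X \<subseteq> E"
  proof
    fix e assume e: "e \<in> fsel A X"
    then have "e \<in> EH" "fst e \<in> A" using XH unfolding fsel_def by auto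
    then show "e \<in> E" using a16 a15 by auto
  qed
  show "fsel D X \<inter> E = {}" using ELR a15 unfolding fsel_def by auto
  show "X = fsel A X \<union> fsel D X" using XH EH_LR unfolding fsel_def by auto
  show "fsel A X \<inter> fsel D X = {}" using a15 unfolding fsel_def by auto
qed

lemma sigH_low:
  assumes XH: "X \<subseteq> EH" and m: "m \<le> r + 1"
  shows "signature rkH X m = signature rk (fsel A X) m"
proof -
  have "{e\<in>X. rkH e = m} = {e\<in>fsel A X. rk e = m}"
  proof
    show "{e\<in>X. rkH e = m} \<subseteq> {e\<in>fsel A X. rk e = m}"
    proof
      fix e assume e: "e \<in> {e\<in>X. rkH e = m}"
      have "e \<in> E"
      proof (rule ccontr)
        assume "e \<notin> E"
        then have "rkH e = r + 2" using a18 e XH by auto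
        then show False using e m by auto
      qed
      then show "e \<in> {e\<in>fsel A X. rk e = m}" using e ELR a17 unfolding fsel_def by auto
    qed
    show "{e\<in>fsel A X. rk e = m} \<subseteq> {e\<in>X. rkH e = m}"
      using split_H(1)[OF XH] a17 unfolding fsel_def by auto
  qed
  then show ?thesis unfolding signature_def by simp
qed

lemma sigH_top:
  assumes XH: "X \<subseteq> EH"
  shows "signature rkH X (r + 2) = card (fsel D X)"
proof -
  have "{e\<in>X. rkH e = r + 2} = fsel D X"
  proof
    show "{e\<in>X. rkH e = r + 2} \<subseteq> fsel D X"
    proof
      fix e assume e: "e \<in> {e\<in>X. rkH e = r + 2}"
      have "e \<notin> E" using e a17 rkle by fastforce
      then show "e \<in> fsel D X" using e split_H(1,3)[OF XH] by blast
    qed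
    show "fsel D X \<subseteq> {e\<in>X. rkH e = r + 2}"
      using split_H(2)[OF XH] a18 XH unfolding fsel_def by auto
  qed
  then show ?thesis unfolding signature_def by simp
qed

lemma sigH_high:
  assumes XH: "X \<subseteq> EH" and m: "r + 2 < m"
  shows "signature rkH X m = 0"
  using sig_high[of X EH rkH "r+2" m] XH m GrH by simp

lemma sigG_high:
  assumes XE: "X \<subseteq> E" and m: "r + 1 < m"
  shows "signature rk X m = 0"
  using sig_high[of X E rk "r+1" m] XE m GrE by simp

lemma cardXD:
  assumes mX: "matching X"
  shows "card (fsel D X) \<le> k"
proof -
  have "matching (fsel D X)" using matching_subset[OF mX] unfolding fsel_def by auto
  then have "inj_on fst (fsel D X)" by (rule inj_fst_matching)
  moreover have "fst ` fsel D X \<subseteq> D" unfolding fsel_def by auto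
  ultimately show ?thesis using card_inj_on_le a13 a14 by blast
qed

lemma ext_ok:
  assumes rm: "rank_maximal E rk N" and Y: "Y \<in> PMs D (P - Vs N)"
  shows "matching (N \<union> Y)" "N \<union> Y \<subseteq> EH" "fsel A (N \<union> Y) = N" "fsel D (N \<union> Y) = Y" "card Y = k"
proof -
  have mN: "matching N" and NE: "N \<subseteq> E" using rm unfolding rank_maximal_def by auto
  have YQ: "Y \<subseteq> D \<times> (P - Vs N)" and mY: "matching Y" and cY: "card Y = card D"
    using Y unfolding PMs_def by auto
  have "Vs Y \<subseteq> D \<union> (P - Vs N)" using Vs_prod[OF YQ] .
  moreover have "Vs N \<subseteq> A \<union> P" using Vs_prod[OF subset_trans[OF NE ELR]] .
  ultimately have "Vs N \<inter> Vs Y = {}" using a15 by blast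
  then show "matching (N \<union> Y)" using matching_union[OF mN mY] by blast
  show "N \<union> Y \<subseteq> EH" using NE YQ P1[OF rm] a16 by blast
  show "fsel A (N \<union> Y) = N" using NE ELR YQ a15 unfolding fsel_def by auto
  have "\<forall>e\<in>N. fst e \<notin> D" using NE ELR a15 by fastforce
  then show "fsel D (N \<union> Y) = Y" using YQ unfolding fsel_def by auto
  show "card Y = k" using cY a14 by simp
qed

lemma PMs_ne:
  assumes rm: "rank_maximal E rk N"
  shows "PMs D (P - Vs N) \<noteq> {}"
proof -
  have "card (P - Vs N) = card D" using cardN(2)[OF rm] k_eq a14 by simp
  moreover have "D \<inter> (P - Vs N) = {}" using a15 by blast
  ultimately have "card (PMs D (P - Vs N)) = fact (card D)"
    using card_PMs[OF a13] finP by simp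
  then show ?thesis by (metis card.empty fact_nonzero)
qed

lemma CharH: "rank_maximal EH rkH X \<longleftrightarrow>
  matching X \<and> X \<subseteq> EH \<and> rank_maximal E rk (fsel A X) \<and> card (fsel D X) = k"
proof
  assume rmX: "rank_maximal EH rkH X"
  have mX: "matching X" and XH: "X \<subseteq> EH" using rmX unfolding rank_maximal_def by auto
  obtain Y where Y: "Y \<in> PMs D (P - Vs M)" using PMs_ne[OF a11] by blast
  note eo = ext_ok[OF a11 Y]
  have mXA: "matching (fsel A X)" using matching_subset[OF mX] unfolding fsel_def by auto
  have XAE: "fsel A X \<subseteq> E" using split_H(1)[OF XH] .
  have MpH: "signature rkH (M \<union> Y) m = signature rk M m" if "m \<le> r+1" for m
    using sigH_low[OF eo(2) that] eo(3) by simp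
  have XH': "signature rkH X m = signature rk (fsel A X) m" if "m \<le> r+1" for m
    using sigH_low[OF XH that] .
  have ME: "M \<subseteq> E" using a11 unfolding rank_maximal_def by auto
  have sigeq: "signature rk (fsel A X) = signature rk M"
  proof (rule ccontr)
    assume ne: "signature rk (fsel A X) \<noteq> signature rk M"
    then consider "lex_greater (signature rk (fsel A X)) (signature rk M)"
      | "lex_greater (signature rk M) (signature rk (fsel A X))" using lex_total by blast
    then show False
    proof cases
      case 1 then show False using a11 mXA XAE unfolding rank_maximal_def by blast
    next
      case 2
      then obtain l where l: "signature rk (fsel A X) l < signature rk M l"
        "\<forall>j<l. signature rk M j = signature rk (fsel A X) j" unfolding lex_greater_def by blast
      have "l \<le> r + 1"
      proof (rule ccontr)
        assume "\<not> l \<le> r + 1"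
        then have "signature rk M l = 0" using sigG_high[OF ME] by simp
        then show False using l(1) by simp
      qed
      then have "lex_greater (signature rkH (M \<union> Y)) (signature rkH X)"
        unfolding lex_greater_def using l MpH XH' by (intro exI[of _ l]) auto
      then show False using rmX eo(1,2) unfolding rank_maximal_def by blast
    qed
  qed
  have rmA: "rank_maximal E rk (fsel A X)" using rm_same_sig[OF a11 mXA XAE sigeq] .
  have "card (fsel D X) = k"
  proof (rule ccontr)
    assume "card (fsel D X) \<noteq> k"
    then have lt: "card (fsel D X) < k" using cardXD[OF mX] by simp
    have "lex_greater (signature rkH (M \<union> Y)) (signature rkH X)"
      unfolding lex_greater_def
    proof (intro exI[of _ "r+2"] conjI allI impI)
      show "signature rkH X (r + 2) < signature rkH (M \<union> Y) (r + 2)"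
        using sigH_top[OF XH] sigH_top[OF eo(2)] eo(4,5) lt by simp
      fix j assume "j < r + 2"
      then have "j \<le> r + 1" by simp
      then show "signature rkH (M \<union> Y) j = signature rkH X j" using MpH XH' sigeq by simp
    qed
    then show False using rmX eo(1,2) unfolding rank_maximal_def by blast
  qed
  then show "matching X \<and> X \<subseteq> EH \<and> rank_maximal E rk (fsel A X) \<and> card (fsel D X) = k"
    using mX XH rmA by blast
next
  assume "matching X \<and> X \<subseteq> EH \<and> rank_maximal E rk (fsel A X) \<and> card (fsel D X) = k"
  then have mX: "matching X" and XH: "X \<subseteq> EH" and rmA: "rank_maximal E rk (fsel A X)"
    and cD: "card (fsel D X) = k" by auto
  show "rank_maximal EH rkH X"
    unfolding rank_maximal_def
  proof (intro conjI allI impI notI)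
    show "matching X" "X \<subseteq> EH" using mX XH by auto
    fix Z assume Z: "matching Z \<and> Z \<subseteq> EH" and lg: "lex_greater (signature rkH Z) (signature rkH X)"
    have mZ: "matching Z" and ZH: "Z \<subseteq> EH" using Z by auto
    obtain l where l: "signature rkH X l < signature rkH Z l" "\<forall>j<l. signature rkH X j = signature rkH Z j"
      using lg unfolding lex_greater_def by metis
    consider "l \<le> r + 1" | "l = r + 2" | "r + 2 < l" by linarith
    then show False
    proof cases
      case 1
      have "lex_greater (signature rk (fsel A Z)) (signature rk (fsel A X))"
        unfolding lex_greater_def using l 1 sigH_low[OF XH] sigH_low[OF ZH]
        by (intro exI[of _ l]) auto
      moreover have "matching (fsel A Z)" using matching_subset[OF mZ] unfolding fsel_def by auto
      moreover have "fsel A Z \<subseteq> E" using split_H(1)[OF ZH] .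
      ultimately show False using rmA unfolding rank_maximal_def by blast
    next
      case 2
      then show False using l(1) sigH_top[OF XH] sigH_top[OF ZH] cD cardXD[OF mZ] by simp
    next
      case 3
      then show False using l(1) sigH_high[OF ZH] by simp
    qed
  qed
qed


lemma finEH: "finite EH"
  using EH_LR a1 a13 finP by (meson finite_SigmaI finite_Un finite_subset)

lemma part2:
  assumes rm: "rank_maximal EH rkH N'"
  shows "A \<union> D \<subseteq> Vs N' \<and> P \<subseteq> Vs N'
        \<and> N' \<subseteq> reduced_graph (A \<union> D \<union> P) EH rkH (r + 2)
        \<and> perfect_matching (A \<union> D \<union> P) (reduced_graph (A \<union> D \<union> P) EH rkH (r + 2)) N'"
proof -
  have "Sset (A \<union> D \<union> P) EH rkH (r+2) N'" using invH[of "r+2" N'] GrH rm by simp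
  then have sub: "N' \<subseteq> reduced_graph (A \<union> D \<union> P) EH rkH (r + 2)"
    unfolding Sset_def reduced_graph_def by blast
  have c: "matching N' \<and> N' \<subseteq> EH \<and> rank_maximal E rk (fsel A N') \<and> card (fsel D N') = k"
    using CharH rm by blast
  then have mX: "matching N'" and XH: "N' \<subseteq> EH" and rmA: "rank_maximal E rk (fsel A N')"
    and cD: "card (fsel D N') = k" by auto
  have finX: "finite N'" using finEH XH by (rule finite_subset[rotated])
  have fA: "fsel A N' \<subseteq> N'" and fD: "fsel D N' \<subseteq> N'" unfolding fsel_def by auto
  have Acov: "A \<subseteq> Vs N'" using allA[OF rmA] Vs_mono[OF fA] by blast
  have "fst ` fsel D N' = D"
  proof (rule card_subset_eq[OF a13])
    show "fst ` fsel D N' \<subseteq> D" unfolding fsel_def by auto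
    have "matching (fsel D N')" using matching_subset[OF mX fD] .
    then have "card (fst ` fsel D N') = card (fsel D N')" by (rule card_image[OF inj_fst_matching])
    then show "card (fst ` fsel D N') = card D" using cD a14 by simp
  qed
  have Dcov: "D \<subseteq> Vs N'"
  proof
    fix d assume "d \<in> D"
    then obtain e where e: "e \<in> fsel D N'" "d = fst e" using \<open>fst ` fsel D N' = D\<close> by blast
    then have "e \<in> N'" using fD by blast
    then show "d \<in> Vs N'" using Vs_I[of e N' d] e(2) by simp
  qed
  have "card (fsel A N' \<union> fsel D N') = card (fsel A N') + card (fsel D N')"
    by (rule card_Un_disjoint[OF finite_subset[OF fA finX] finite_subset[OF fD finX] split_H(4)[OF XH]])
  then have "card N' = card (fsel A N') + card (fsel D N')" using split_H(3)[OF XH] by simp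
  also have "\<dots> = card P" using cardN(1,3)[OF rmA] cD k_eq by simp
  finally have cN: "card N' = card P" .
  have "snd ` N' = P"
  proof (rule card_subset_eq[OF finP])
    show "snd ` N' \<subseteq> P" using XH EH_LR by auto
    show "card (snd ` N') = card P" using card_image[OF inj_snd_matching[OF mX]] cN by simp
  qed
  have Pcov: "P \<subseteq> Vs N'"
  proof
    fix p assume "p \<in> P"
    then obtain e where e: "e \<in> N'" "p = snd e" using \<open>snd ` N' = P\<close> by blast
    then show "p \<in> Vs N'" using Vs_I[of e N' p] by simp
  qed
  have "perfect_matching (A \<union> D \<union> P) (reduced_graph (A \<union> D \<union> P) EH rkH (r + 2)) N'"
    unfolding perfect_matching_def using mX sub Acov Dcov Pcov by blast
  then show ?thesis using Acov Dcov Pcov sub by blast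
qed

lemma part3:
  assumes "matching N" "N \<subseteq> E" "\<not> rank_maximal E rk N"
  shows "\<not> (\<exists>N'. perfect_matching (A \<union> D \<union> P) (reduced_graph (A \<union> D \<union> P) EH rkH (r + 2)) N'
               \<and> {e \<in> N'. fst e \<in> A} = N)"
proof
  assume "\<exists>N'. perfect_matching (A \<union> D \<union> P) (reduced_graph (A \<union> D \<union> P) EH rkH (r + 2)) N'
               \<and> {e \<in> N'. fst e \<in> A} = N"
  then obtain X where pm: "perfect_matching (A \<union> D \<union> P) (reduced_graph (A \<union> D \<union> P) EH rkH (r + 2)) X"
    and XA: "{e \<in> X. fst e \<in> A} = N" by blast
  have mX: "matching X" and XR: "X \<subseteq> prune (A \<union> D \<union> P) (irving_graph (A \<union> D \<union> P) EH rkH (r+2))"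
    and cov: "A \<union> D \<union> P \<subseteq> Vs X"
    using pm unfolding perfect_matching_def reduced_graph_def by auto
  have "snd (irv (A \<union> D \<union> P) EH rkH (Suc (r+2))) \<subseteq> Vs X"
    using irv_snd_sub[of "A \<union> D \<union> P" EH rkH "Suc (r+2)"] cov by blast
  then have "Sset (A \<union> D \<union> P) EH rkH (r+2) X" unfolding Sset_def using mX XR by blast
  then have "rank_maximal EH rkH X" using invH[of "r+2" X] GrH by simp
  then have "rank_maximal E rk (fsel A X)" using CharH by blast
  then show False using XA assms(3) unfolding fsel_def by simp
qed

lemma part1:
  assumes rm: "rank_maximal E rk N"
  shows "card {N'. rank_maximal EH rkH N' \<and> {e \<in> N'. fst e \<in> A} = N} = fact k"
proof -
  define Q where "Q = P - Vs N"
  have mN: "matching N" and NE: "N \<subseteq> E" using rm unfolding rank_maximal_def by auto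
  have T: "{N'. rank_maximal EH rkH N' \<and> {e \<in> N'. fst e \<in> A} = N} = (\<lambda>Y. N \<union> Y) ` PMs D Q"
  proof
    show "(\<lambda>Y. N \<union> Y) ` PMs D Q \<subseteq> {N'. rank_maximal EH rkH N' \<and> {e \<in> N'. fst e \<in> A} = N}"
    proof
      fix X assume "X \<in> (\<lambda>Y. N \<union> Y) ` PMs D Q"
      then obtain Y where Y: "Y \<in> PMs D Q" and X: "X = N \<union> Y" by blast
      note eo = ext_ok[OF rm Y[unfolded Q_def]]
      have "rank_maximal EH rkH X" using CharH eo rm unfolding X by simp
      moreover have "{e \<in> X. fst e \<in> A} = N" using eo(3) unfolding X fsel_def .
      ultimately show "X \<in> {N'. rank_maximal EH rkH N' \<and> {e \<in> N'. fst e \<in> A} = N}" by blast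
    qed
    show "{N'. rank_maximal EH rkH N' \<and> {e \<in> N'. fst e \<in> A} = N} \<subseteq> (\<lambda>Y. N \<union> Y) ` PMs D Q"
    proof
      fix X assume "X \<in> {N'. rank_maximal EH rkH N' \<and> {e \<in> N'. fst e \<in> A} = N}"
      then have rmX: "rank_maximal EH rkH X" and XA: "fsel A X = N" unfolding fsel_def by auto
      have c: "matching X \<and> X \<subseteq> EH \<and> rank_maximal E rk (fsel A X) \<and> card (fsel D X) = k"
        using CharH rmX by blast
      then have mX: "matching X" and XH: "X \<subseteq> EH" and cD: "card (fsel D X) = k" by auto
      have X: "X = N \<union> fsel D X" using split_H(3)[OF XH] XA by simp
      have "fsel D X \<subseteq> D \<times> Q"
      proof
        fix e assume e: "e \<in> fsel D X"
        then have eX: "e \<in> X" and eD: "fst e \<in> D" unfolding fsel_def by auto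
        have sP: "snd e \<in> P" using eX XH EH_LR by auto
        have "snd e \<notin> Vs N"
        proof
          assume "snd e \<in> Vs N"
          then obtain e' where e': "e' \<in> N" "snd e \<in> {fst e', snd e'}" by (rule Vs_E)
          have "e' \<in> X" using e'(1) X by blast
          then have "e = e'" using matching_unique[OF mX eX _ _ e'(2)] by simp
          then have "fst e \<in> A" using e'(1) NE ELR by auto
          then show False using eD a15 by blast
        qed
        then show "e \<in> D \<times> Q" using eD sP unfolding Q_def by (cases e) auto
      qed
      moreover have "matching (fsel D X)" using matching_subset[OF mX] unfolding fsel_def by auto
      ultimately have "fsel D X \<in> PMs D Q" unfolding PMs_def using cD a14 by simp
      then show "X \<in> (\<lambda>Y. N \<union> Y) ` PMs D Q" using X by blast
    qed
  qed
  have inj: "inj_on (\<lambda>Y. N \<union> Y) (PMs D Q)"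
  proof (rule inj_onI)
    fix Y Y' assume "Y \<in> PMs D Q" "Y' \<in> PMs D Q" "N \<union> Y = N \<union> Y'"
    then show "Y = Y'" using ext_ok(4)[OF rm, of Y] ext_ok(4)[OF rm, of Y'] unfolding Q_def by metis
  qed
  have "card Q = card D" using cardN(2)[OF rm] k_eq a14 unfolding Q_def by simp
  moreover have "D \<inter> Q = {}" using a15 unfolding Q_def by blast
  moreover have "finite Q" using finP unfolding Q_def by simp
  ultimately have "card (PMs D Q) = fact (card D)" using card_PMs[OF a13] by simp
  then show ?thesis unfolding T using card_image[OF inj] a14 by simp
qed

lemma main:
  shows
    "(\<forall>N. rank_maximal E rk N \<longrightarrow>
        card {N'. rank_maximal EH rkH N' \<and> {e \<in> N'. fst e \<in> A} = N} = fact k)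
   \<and> (\<forall>N'. rank_maximal EH rkH N' \<longrightarrow>
        A \<union> D \<subseteq> Vs N' \<and> P \<subseteq> Vs N'
        \<and> N' \<subseteq> reduced_graph (A \<union> D \<union> P) EH rkH (r + 2)
        \<and> perfect_matching (A \<union> D \<union> P) (reduced_graph (A \<union> D \<union> P) EH rkH (r + 2)) N')
   \<and> (\<forall>N. matching N \<and> N \<subseteq> E \<and> \<not> rank_maximal E rk N \<longrightarrow>
        \<not> (\<exists>N'. perfect_matching (A \<union> D \<union> P) (reduced_graph (A \<union> D \<union> P) EH rkH (r + 2)) N'
               \<and> {e \<in> N'. fst e \<in> A} = N))"
  using part1 part2 part3 by blast

end


theorem lemma6:
  fixes A P0 P D :: "'v set" and E0 E EH :: "'v edges"
    and rk rkH :: "'v \<times> 'v \<Rightarrow> nat" and r k :: nat and lr :: "'v \<Rightarrow> 'v"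
    and M :: "'v edges"
  assumes "finite A" and "finite P0" and "A \<inter> P0 = {}"
    and "E0 \<subseteq> A \<times> P0" and "\<forall>e\<in>E0. rk e \<in> {1..r}"
    \<comment> \<open>last-resort posts\<close>
    and "inj_on lr A" and "lr ` A \<inter> (A \<union> P0) = {}"
    and "P = P0 \<union> lr ` A"
    and "E = E0 \<union> (\<lambda>a. (a, lr a)) ` A"
    and "\<forall>a\<in>A. rk (a, lr a) = r + 1"
    \<comment> \<open>M rank-maximal in G, k posts unmatched\<close>
    and "rank_maximal E rk M"
    and "k = card (P - Vs M)"
    \<comment> \<open>the instance H\<close>
    and "finite D" and "card D = k" and "D \<inter> (A \<union> P) = {}"
    and "EH = E \<union> D \<times> (P \<inter> (\<Inter>i\<in>{1..r+1}. irving_even (A \<union> P) E rk i))"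
    and "\<forall>e\<in>E. rkH e = rk e"
    and "\<forall>e\<in>EH - E. rkH e = r + 2"
  shows
    "(\<forall>N. rank_maximal E rk N \<longrightarrow>
        card {N'. rank_maximal EH rkH N' \<and> {e \<in> N'. fst e \<in> A} = N} = fact k)
   \<and> (\<forall>N'. rank_maximal EH rkH N' \<longrightarrow>
        A \<union> D \<subseteq> Vs N' \<and> P \<subseteq> Vs N'
        \<and> N' \<subseteq> reduced_graph (A \<union> D \<union> P) EH rkH (r + 2)
        \<and> perfect_matching (A \<union> D \<union> P) (reduced_graph (A \<union> D \<union> P) EH rkH (r + 2)) N')
   \<and> (\<forall>N. matching N \<and> N \<subseteq> E \<and> \<not> rank_maximal E rk N \<longrightarrow>
        \<not> (\<exists>N'. perfect_matching (A \<union> D \<union> P) (reduced_graph (A \<union> D \<union> P) EH rkH (r + 2)) N'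
               \<and> {e \<in> N'. fst e \<in> A} = N))"
    by (rule main[OF assms])

end
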